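(* Let $0\le d\le 1$. There exists a quantum algorithm using $\tilde{O}(n^{1-d}\sqrt{m})$ queries that partitions $V$ into two sets $V^{d}_h$ and $V^{d}_l$ such that, with high probability, $V^{d}_h\subseteq \mathcal{V}^{d}_h$ and $V^{d}_l\subseteq \mathcal{V}^{d}_l$, where $\mathcal{V}^{d}_h = \{v \in V \mid \deg(v) \ge \frac{9}{10} n^{d}\}$ and $\mathcal{V}^{d}_l = \{v \in V \mid \deg(v) \leq \frac{11}{10} n^{d}\}$.
   Context: $G=(V,E)$ is an undirected, unweighted graph with $n=|V|$ and $m=|E|$; $V$ and $m$ are known. The edge set is accessed only through the unitary oracle $\mathcal{O}_G$ mapping $\ket{\{u,v\}}\ket{b}\ket{z}$ to $\ket{\{u,v\}}\ket{b\oplus 1}\ket{z}$ if $\{u,v\}\in E$ and leaving it unchanged otherwise; query complexity counts calls to $\mathcal{O}_G$. $\deg(v)$ is the degree of $v$ in $G$. $\tilde O(\cdot)$ hides $\mathrm{polylog}\, n$ factors. *)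

theory Defs
  imports Complex_Main
begin

definition vpairs :: "nat \<Rightarrow> nat set set" where
  "vpairs n = {e. \<exists>u v. u < n \<and> v < n \<and> u \<noteq> v \<and> e = {u, v}}"

definition is_graph :: "nat \<Rightarrow> nat set set \<Rightarrow> bool" where
  "is_graph n E \<longleftrightarrow> E \<subseteq> vpairs n"

definition deg :: "nat set set \<Rightarrow> nat \<Rightarrow> nat" where
  "deg E v = card {e \<in> E. v \<in> e}"

definition high_set :: "nat \<Rightarrow> real \<Rightarrow> nat set set \<Rightarrow> nat set" where
  "high_set n d E = {v. v < n \<and> real (deg E v) \<ge> 9/10 * real n powr d}"

definition low_set :: "nat \<Rightarrow> real \<Rightarrow> nat set set \<Rightarrow> nat set" where
  "low_set n d E = {v. v < n \<and> real (deg E v) \<le> 11/10 * real n powr d}"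

(* Quantum query model. Computational basis states are triples (e, b, z):
  query register e (a vertex pair), answer bit b, workspace index z < W. *)

type_synonym idx = "nat set \<times> bool \<times> nat"
type_synonym qstate = "idx \<Rightarrow> complex"
type_synonym qmat = "idx \<Rightarrow> idx \<Rightarrow> complex"

definition qbasis :: "nat \<Rightarrow> nat \<Rightarrow> idx set" where
  "qbasis n W = {(e, b, z). e \<in> vpairs n \<and> z < W}"

definition unitary_on :: "idx set \<Rightarrow> qmat \<Rightarrow> bool" where
  "unitary_on B M \<longleftrightarrow>
     (\<forall>i\<in>B. \<forall>j\<in>B. (\<Sum>k\<in>B. cnj (M k i) * M k j) = (if i = j then 1 else 0))"

definition app :: "idx set \<Rightarrow> qmat \<Rightarrow> qstate \<Rightarrow> qstate" where
  "app B M \<psi> = (\<lambda>i. \<Sum>j\<in>B. M i j * \<psi> j)"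

definition query_op :: "nat set set \<Rightarrow> qstate \<Rightarrow> qstate" where
  "query_op E \<psi> = (\<lambda>(e, b, z). \<psi> (e, b \<noteq> (e \<in> E), z))"

(* run [U0, U1, ..., UT] computes UT O_G ... U1 O_G U0 \<psi>, using T queries. *)
fun run :: "idx set \<Rightarrow> nat set set \<Rightarrow> qmat list \<Rightarrow> qstate \<Rightarrow> qstate" where
  "run B E [] \<psi> = \<psi>"
| "run B E [U] \<psi> = app B U \<psi>"
| "run B E (U # U' # Us) \<psi> = run B E (U' # Us) (query_op E (app B U \<psi>))"

definition ket :: "idx \<Rightarrow> qstate" where
  "ket s = (\<lambda>i. if i = s then 1 else 0)"

(* Probability that measuring the final state in the computational basis and
  applying the classical post-processing out yields an output satisfying P. *)
definition out_prob ::
  "idx set \<Rightarrow> nat set set \<Rightarrow> qmat list \<Rightarrow> idx \<Rightarrow> (idx \<Rightarrow> 'o) \<Rightarrow> ('o \<Rightarrow> bool) \<Rightarrow> real" where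
  "out_prob B E Us s0 out P = (\<Sum>j\<in>{j \<in> B. P (out j)}. (cmod (run B E Us (ket s0) j))\<^sup>2)"

(* The output is the set V_h (V_l is its complement in V); success means
  V_h \<subseteq> high set and V_l \<subseteq> low set. *)
definition good_partition :: "nat \<Rightarrow> real \<Rightarrow> nat set set \<Rightarrow> nat set \<Rightarrow> bool" where
  "good_partition n d E Vh \<longleftrightarrow>
     Vh \<subseteq> {..<n} \<and> Vh \<subseteq> high_set n d E \<and> ({..<n} - Vh) \<subseteq> low_set n d E"

end

theory Submission
  imports Defs "HOL-Library.Nat_Bijection"
begin

lemma qbasis_eq: "qbasis n W = vpairs n \<times> (UNIV \<times> {..<W})"
  unfolding qbasis_def by auto

lemma finite_vpairs: "finite (vpairs n)"
proof -
  have "vpairs n \<subseteq> (\<lambda>(u,v). {u,v}) ` ({..<n} \<times> {..<n})"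
    unfolding vpairs_def by auto
  thus ?thesis by (rule finite_subset) auto
qed

lemma finite_qbasis: "finite (qbasis n W)"
  unfolding qbasis_eq using finite_vpairs by auto

lemma sum_qbasis:
  "(\<Sum>i\<in>qbasis n W. F i) = (\<Sum>e\<in>vpairs n. \<Sum>b\<in>UNIV. \<Sum>z<W. F (e,b,z))"
  unfolding qbasis_eq
  by (simp add: sum.cartesian_product finite_vpairs)


definition ps :: "nat \<Rightarrow> nat \<Rightarrow> (nat set \<Rightarrow> complex) \<Rightarrow> (bool \<Rightarrow> complex) \<Rightarrow> nat \<Rightarrow> qstate" where
  "ps n W f g z0 = (\<lambda>(e,b,z). if e \<in> vpairs n \<and> z = z0 \<and> z0 < W then f e * g b else 0)"

definition tens :: "nat \<Rightarrow> nat \<Rightarrow> (nat set \<Rightarrow> nat set \<Rightarrow> complex) \<Rightarrow> (bool \<Rightarrow> bool \<Rightarrow> complex) \<Rightarrow> qmat" where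
  "tens n W A H = (\<lambda>(e,b,z) (e',b',z'). if e \<in> vpairs n \<and> e' \<in> vpairs n \<and> z < W \<and> z = z' then A e e' * H b b' else 0)"

definition orth :: "'a set \<Rightarrow> ('a \<Rightarrow> 'a \<Rightarrow> complex) \<Rightarrow> bool" where
  "orth S A \<longleftrightarrow> (\<forall>i\<in>S. \<forall>j\<in>S. (\<Sum>k\<in>S. cnj (A k i) * A k j) = (if i = j then 1 else 0))"

lemma app_tens:
  "app (qbasis n W) (tens n W A H) (ps n W f g z0) =
   ps n W (\<lambda>e. \<Sum>e'\<in>vpairs n. A e e' * f e') (\<lambda>b. \<Sum>b'\<in>UNIV. H b b' * g b') z0"
proof (rule ext, clarify)
  fix e b z
  show "app (qbasis n W) (tens n W A H) (ps n W f g z0) (e, b, z) =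
    ps n W (\<lambda>e. \<Sum>e'\<in>vpairs n. A e e' * f e') (\<lambda>b. \<Sum>b'\<in>UNIV. H b b' * g b') z0 (e, b, z)"
  proof (cases "e \<in> vpairs n \<and> z = z0 \<and> z0 < W")
    case True
    have "app (qbasis n W) (tens n W A H) (ps n W f g z0) (e, b, z) =
      (\<Sum>e'\<in>vpairs n. \<Sum>b'\<in>UNIV. \<Sum>z'<W. (if z' = z0 then A e e' * H b b' * (f e' * g b') else 0))"
      unfolding app_def sum_qbasis using True
      by (intro sum.cong refl) (auto simp: tens_def ps_def)
    also have "\<dots> = (\<Sum>e'\<in>vpairs n. \<Sum>b'\<in>UNIV. A e e' * H b b' * (f e' * g b'))"
      using True by simp
    also have "\<dots> = (\<Sum>e'\<in>vpairs n. A e e' * f e') * (\<Sum>b'\<in>UNIV. H b b' * g b')"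
      by (simp add: sum_product mult_ac) (rule sum.swap)
    finally show ?thesis using True by (simp add: ps_def)
  next
    case False
    have "app (qbasis n W) (tens n W A H) (ps n W f g z0) (e, b, z) = 0"
      unfolding app_def sum_qbasis using False
      by (intro sum.neutral ballI) (auto simp: tens_def ps_def)
    thus ?thesis using False unfolding ps_def by auto
  qed
qed

lemma orth_tens:
  assumes "orth (vpairs n) A" "orth UNIV H"
  shows "unitary_on (qbasis n W) (tens n W A H)"
  unfolding unitary_on_def
proof (clarify)
  fix e1 b1 z1 e2 b2 z2
  assume 1: "(e1, b1, z1) \<in> qbasis n W" and 2: "(e2, b2, z2) \<in> qbasis n W"
  have "(\<Sum>k\<in>qbasis n W. cnj (tens n W A H k (e1, b1, z1)) * tens n W A H k (e2, b2, z2))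
     = (\<Sum>e\<in>vpairs n. \<Sum>b\<in>UNIV. \<Sum>z<W. if z = z1 \<and> z = z2 then
          (cnj (A e e1) * A e e2) * (cnj (H b b1) * H b b2) else 0)"
    unfolding sum_qbasis using 1 2
    by (intro sum.cong refl) (auto simp: tens_def qbasis_def mult_ac)
  also have "\<dots> = (if z1 = z2 then (\<Sum>e\<in>vpairs n. cnj (A e e1) * A e e2) *
        (\<Sum>b\<in>UNIV. cnj (H b b1) * H b b2) else 0)"
  proof (cases "z1 = z2")
    case True
    then show ?thesis using 1 2 by (simp add: qbasis_def sum_product mult_ac) (rule sum.swap)
  next
    case False
    then show ?thesis by (auto intro!: sum.neutral)
  qed
  also have "\<dots> = (if (e1, b1, z1) = (e2, b2, z2) then 1 else 0)"
    using assms 1 2 unfolding orth_def qbasis_def by auto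
  finally show "(\<Sum>k\<in>qbasis n W. cnj (tens n W A H k (e1, b1, z1)) * tens n W A H k (e2, b2, z2)) =
       (if (e1, b1, z1) = (e2, b2, z2) then 1 else 0)" .
qed

fun runq :: "idx set \<Rightarrow> nat set set \<Rightarrow> qmat list \<Rightarrow> qstate \<Rightarrow> qstate" where
  "runq B E [] \<psi> = \<psi>"
| "runq B E (U # Us) \<psi> = runq B E Us (app B U (query_op E \<psi>))"

lemma run_Cons: "run B E (U # Us) \<psi> = runq B E Us (app B U \<psi>)"
proof (induction Us arbitrary: U \<psi>)
  case Nil then show ?case by simp
next
  case (Cons V Vs) then show ?case by simp
qed

lemma runq_append: "runq B E (xs @ ys) \<psi> = runq B E ys (runq B E xs \<psi>)"
  by (induction xs arbitrary: \<psi>) auto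

lemma app_lin: "app B U (\<lambda>i. \<Sum>x\<in>X. c x * \<phi> x i) = (\<lambda>i. \<Sum>x\<in>X. c x * app B U (\<phi> x) i)"
  unfolding app_def by (auto simp: sum_distrib_left mult_ac intro: sum.swap)

lemma query_lin: "query_op E (\<lambda>i. \<Sum>x\<in>X. c x * \<phi> x i) = (\<lambda>i. \<Sum>x\<in>X. c x * query_op E (\<phi> x) i)"
  unfolding query_op_def by auto

lemma runq_lin: "runq B E Us (\<lambda>i. \<Sum>x\<in>X. c x * \<phi> x i) = (\<lambda>i. \<Sum>x\<in>X. c x * runq B E Us (\<phi> x) i)"
proof (induction Us arbitrary: \<phi>)
  case Nil then show ?case by simp
next
  case (Cons U Us)
  show ?case
    by (simp add: query_lin app_lin Cons.IH[of "\<lambda>x. app B U (query_op E (\<phi> x))", symmetric])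
qed

definition mn :: "bool \<Rightarrow> complex" where
  "mn b = (if b then - 1 / sqrt 2 else 1 / sqrt 2)"

definition sg :: "nat set set \<Rightarrow> nat set \<Rightarrow> complex" where
  "sg E e = (if e \<in> E then -1 else 1)"

lemma query_mn: "query_op E (ps n W f mn z0) = ps n W (\<lambda>e. sg E e * f e) mn z0"
  by (rule ext) (auto simp: query_op_def ps_def mn_def sg_def)

definition dF :: "bool \<Rightarrow> complex" where "dF b = (if b then 0 else 1)"

definition qv :: "nat \<Rightarrow> nat \<Rightarrow> nat set set \<Rightarrow> (nat set \<Rightarrow> complex) \<Rightarrow> nat \<Rightarrow> qstate" where
  "qv n W E f z0 = (\<lambda>(e,b,z). if e \<in> vpairs n \<and> z = z0 \<and> z0 < W \<and> b = (e \<in> E) then f e else 0)"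

lemma query_dF: "query_op E (ps n W f dF z0) = qv n W E f z0"
  by (rule ext) (auto simp: query_op_def ps_def dF_def qv_def)


lemma rot_aux1: fixes r q a c Nn :: real assumes "Nn \<noteq> 0"
  shows "r * (2 * ((- (r*r) * a + (q*q) * c) / Nn) + a) = (1 - 2 * (r*r/Nn)) * (r*a) + 2 * (r * q / Nn) * (q * c)"
  using assms by (simp add: field_simps)
lemma rot_aux2: fixes r q a c Nn :: real assumes "Nn \<noteq> 0"
  shows "q * (2 * ((- (r*r) * a + (q*q) * c) / Nn) - c) = (2 * (q*q/Nn) - 1) * (q*c) - 2 * (r * q / Nn) * (r * a)"
  using assms by (simp add: field_simps)

locale grov =
  fixes N m :: nat
  assumes mpos: "0 < m" and mN: "m \<le> N"
begin

definition th :: real where "th = arcsin (sqrt (real m / real N))"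

fun ac :: "nat \<Rightarrow> real \<times> real" where
  "ac 0 = (1 / sqrt N, 1 / sqrt N)"
| "ac (Suc t) = (let (a, c) = ac t; M = (- real m * a + (real N - real m) * c) / real N
                 in (2 * M + a, 2 * M - c))"

lemma Npos: "0 < N" using mpos mN by simp

lemma sin_th: "sin th = sqrt (real m / real N)"
  unfolding th_def using mN Npos by (intro sin_arcsin) (auto intro: order_trans[OF _ real_sqrt_ge_zero])

lemma cos_th: "cos th = sqrt ((real N - real m) / real N)"
proof -
  have "cos th = sqrt (1 - (sqrt (real m / real N))\<^sup>2)"
    unfolding th_def using mN Npos by (intro cos_arcsin) (auto intro: order_trans[OF _ real_sqrt_ge_zero])
  also have "(sqrt (real m / real N))\<^sup>2 = real m / real N" by simp
  also have "1 - real m / real N = (real N - real m) / real N" using Npos by (simp add: field_simps)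
  finally show ?thesis .
qed

lemma ac_closed:
  "sqrt m * fst (ac t) = sin ((2 * real t + 1) * th) \<and> sqrt (real N - real m) * snd (ac t) = cos ((2 * real t + 1) * th)"
proof (induction t)
  case 0
  have "sqrt m * (1 / sqrt N) = sqrt (real m / real N)" by (simp add: real_sqrt_divide)
  moreover have "sqrt (real N - real m) * (1 / sqrt N) = sqrt ((real N - real m) / real N)"
    by (simp add: real_sqrt_divide)
  ultimately show ?case using sin_th cos_th by simp
next
  case (Suc t)
  obtain a c where ac: "ac t = (a, c)" by fastforce
  define x where "x = sqrt m * a"
  define y where "y = sqrt (real N - real m) * c"
  define s where "s = sqrt (real m / real N)"
  define co where "co = sqrt ((real N - real m) / real N)"
  have x: "x = sin ((2 * real t + 1) * th)"
    using Suc.IH unfolding x_def ac fst_conv snd_conv by (rule conjunct1)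
  have y: "y = cos ((2 * real t + 1) * th)"
    using Suc.IH unfolding y_def ac fst_conv snd_conv by (rule conjunct2)
  have s2: "s * s = real m / real N" unfolding s_def using Npos by simp
  have co2: "co * co = (real N - real m) / real N" unfolding co_def using mN by simp
  have sco: "s * co = sqrt m * sqrt (real N - real m) / real N"
    unfolding s_def co_def using Npos mN
    by (simp add: real_sqrt_divide real_sqrt_mult[symmetric])
  have sm: "sqrt m * sqrt m = real m" by simp
  have snm: "sqrt (real N - real m) * sqrt (real N - real m) = real N - real m" using mN by simp
  define M where "M = (- real m * a + (real N - real m) * c) / real N"
  have 1: "sqrt m * (2 * M + a) = (1 - 2 * (s * s)) * x + 2 * (s * co) * y"
    unfolding M_def x_def y_def s2 sco
    using rot_aux1[where Nn="real N" and r="sqrt m" and q="sqrt (real N - real m)" and a=a and c=c] Npos unfolding sm snm by simp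
  have 2: "sqrt (real N - real m) * (2 * M - c) = (2 * (co * co) - 1) * y - 2 * (s * co) * x"
    unfolding M_def x_def y_def co2 sco
    using rot_aux2[where Nn="real N" and r="sqrt m" and q="sqrt (real N - real m)" and a=a and c=c] Npos unfolding sm snm by simp
  have ang: "(2 * real (Suc t) + 1) * th = (2 * real t + 1) * th + 2 * th" by (simp add: algebra_simps)
  have c2: "cos (2 * th) = 1 - 2 * (s * s)" "cos (2 * th) = 2 * (co * co) - 1"
    using sin_th cos_th mN Npos unfolding s_def co_def by (simp_all add: cos_double power2_eq_square field_simps)
  have s2t: "sin (2 * th) = 2 * (s * co)"
    using sin_th cos_th unfolding s_def co_def by (simp add: sin_double)
  have f: "fst (ac (Suc t)) = 2 * M + a" and g: "snd (ac (Suc t)) = 2 * M - c"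
    using ac by (simp_all add: Let_def M_def)
  have "sin ((2 * real (Suc t) + 1) * th) = x * cos (2 * th) + y * sin (2 * th)"
    unfolding ang sin_add x y by simp
  also have "\<dots> = sqrt m * fst (ac (Suc t))" unfolding f 1 c2(1) s2t by (simp add: algebra_simps)
  finally have A: "sqrt m * fst (ac (Suc t)) = sin ((2 * real (Suc t) + 1) * th)" by simp
  have "cos ((2 * real (Suc t) + 1) * th) = y * cos (2 * th) - x * sin (2 * th)"
    unfolding ang cos_add x y by simp
  also have "\<dots> = sqrt (real N - real m) * snd (ac (Suc t))" unfolding g 2 c2(2) s2t by (simp add: algebra_simps)
  finally have B: "sqrt (real N - real m) * snd (ac (Suc t)) = cos ((2 * real (Suc t) + 1) * th)" by simp
  show ?case using A B by blast
qed

end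


locale grovE = grov +
  fixes n :: nat and E :: "nat set set"
  assumes Evp: "E \<subseteq> vpairs n" and cardE: "card E = m" and Ndef: "N = card (vpairs n)"
begin

definition Dm :: "nat set \<Rightarrow> nat set \<Rightarrow> complex" where
  "Dm e e' = 2 / of_nat N - (if e = e' then 1 else 0)"

definition Gf :: "(nat set \<Rightarrow> complex) \<Rightarrow> nat set \<Rightarrow> complex" where
  "Gf f = (\<lambda>e. \<Sum>e'\<in>vpairs n. Dm e e' * (sg E e' * f e'))"

definition f0 :: "nat set \<Rightarrow> complex" where "f0 = (\<lambda>e. of_real (1 / sqrt N))"

lemma finE: "finite E" using Evp finite_vpairs finite_subset by blast

lemma Gf_step:
  assumes "\<forall>e\<in>vpairs n. f e = of_real (if e \<in> E then a else c)"
  shows "\<forall>e\<in>vpairs n. Gf f e = of_real (if e \<in> E then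
      2 * ((- real m * a + (real N - real m) * c) / real N) + a
    else 2 * ((- real m * a + (real N - real m) * c) / real N) - c)"
proof
  fix e assume e: "e \<in> vpairs n"
  have split: "vpairs n = E \<union> (vpairs n - E)" using Evp by auto
  have S: "(\<Sum>e'\<in>vpairs n. sg E e' * f e') = of_real (- real m * a + (real N - real m) * c)"
  proof -
    have "(\<Sum>e'\<in>vpairs n. sg E e' * f e') = (\<Sum>e'\<in>E. sg E e' * f e') + (\<Sum>e'\<in>vpairs n - E. sg E e' * f e')"
      by (subst split, rule sum.union_disjoint) (use finite_vpairs finE in auto)
    also have "(\<Sum>e'\<in>E. sg E e' * f e') = (\<Sum>e'\<in>E. of_real (- a))"
      using assms Evp by (intro sum.cong) (auto simp: sg_def)
    also have "(\<Sum>e'\<in>vpairs n - E. sg E e' * f e') = (\<Sum>e'\<in>vpairs n - E. of_real c)"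
      using assms Evp by (intro sum.cong) (auto simp: sg_def)
    also have "card (vpairs n - E) = N - m" using Evp finE by (simp add: card_Diff_subset cardE Ndef)
    ultimately show ?thesis using mN by (simp add: cardE of_nat_diff)
  qed
  have "Gf f e = 2 / of_nat N * (\<Sum>e'\<in>vpairs n. sg E e' * f e') - sg E e * f e"
  proof -
    have "\<And>e'. Dm e e' * (sg E e' * f e') = 2 / of_nat N * (sg E e' * f e') - (if e = e' then sg E e' * f e' else 0)"
      by (simp add: Dm_def algebra_simps)
    hence "Gf f e = (\<Sum>e'\<in>vpairs n. 2 / of_nat N * (sg E e' * f e') - (if e = e' then sg E e' * f e' else 0))"
      unfolding Gf_def by simp
    also have "\<dots> = 2 / of_nat N * (\<Sum>e'\<in>vpairs n. sg E e' * f e') - sg E e * f e"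
      using e by (simp add: sum_subtractf sum_distrib_left finite_vpairs)
    finally show ?thesis .
  qed
  also have "\<dots> = of_real (if e \<in> E then
      2 * ((- real m * a + (real N - real m) * c) / real N) + a
    else 2 * ((- real m * a + (real N - real m) * c) / real N) - c)"
    using assms e unfolding S by (auto simp: sg_def)
  finally show "Gf f e = \<dots>" .
qed

lemma Gf_iter: "\<forall>e\<in>vpairs n. (Gf ^^ t) f0 e = of_real (if e \<in> E then fst (ac t) else snd (ac t))"
proof (induction t)
  case 0 then show ?case by (simp add: f0_def)
next
  case (Suc t)
  obtain a c where ac: "ac t = (a, c)" by fastforce
  show ?case using Gf_step[of "(Gf ^^ t) f0" a c] Suc ac by (simp add: Let_def)
qed

end


definition orthR :: "'a set \<Rightarrow> ('a \<Rightarrow> 'a \<Rightarrow> real) \<Rightarrow> bool" where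
  "orthR S A \<longleftrightarrow> (\<forall>i\<in>S. \<forall>j\<in>S. (\<Sum>k\<in>S. A k i * A k j) = (if i = j then 1 else 0))"

lemma orthR_orth: "orthR S A \<Longrightarrow> orth S (\<lambda>i j. complex_of_real (A i j))"
  unfolding orthR_def orth_def
proof (intro ballI)
  fix i j assume "\<forall>i\<in>S. \<forall>j\<in>S. (\<Sum>k\<in>S. A k i * A k j) = (if i = j then 1 else 0)" "i \<in> S" "j \<in> S"
  moreover have "(\<Sum>k\<in>S. cnj (complex_of_real (A k i)) * complex_of_real (A k j)) = complex_of_real (\<Sum>k\<in>S. A k i * A k j)"
    by (simp add: of_real_sum)
  ultimately show "(\<Sum>k\<in>S. cnj (complex_of_real (A k i)) * complex_of_real (A k j)) = (if i = j then 1 else 0)"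
    by simp
qed

definition DmG :: "nat \<Rightarrow> nat set \<Rightarrow> nat set \<Rightarrow> real" where
  "DmG n e e' = 2 / real (card (vpairs n)) - (if e = e' then 1 else 0)"

lemma orthR_DmG: "orthR (vpairs n) (DmG n)"
  unfolding orthR_def
proof (intro ballI)
  fix i j assume i: "i \<in> vpairs n" and j: "j \<in> vpairs n"
  define N where "N = real (card (vpairs n))"
  have Npos: "N > 0" unfolding N_def using i finite_vpairs card_gt_0_iff by fastforce
  have "(\<Sum>k\<in>vpairs n. DmG n k i * DmG n k j) =
     (\<Sum>k\<in>vpairs n. 4 / (N * N) - (if k = j then 2 / N else 0) - (if k = i then 2 / N else 0)
        + (if k = i then (if i = j then 1 else 0) else 0))"
    unfolding DmG_def N_def[symmetric] by (intro sum.cong) (auto simp: algebra_simps)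
  also have "\<dots> = N * (4 / (N * N)) - 2 / N - 2 / N + (if i = j then 1 else 0)"
    using i j finite_vpairs by (simp add: sum.distrib sum_subtractf N_def)
  also have "\<dots> = (if i = j then 1 else 0)" using Npos by (simp add: field_simps)
  finally show "(\<Sum>k\<in>vpairs n. DmG n k i * DmG n k j) = (if i = j then 1 else 0)" .
qed

definition hh :: "nat \<Rightarrow> nat set \<Rightarrow> nat set \<Rightarrow> real" where
  "hh n e0 e = (if e = e0 then 1 else 0) - 1 / sqrt (card (vpairs n))"

definition KeG :: "nat \<Rightarrow> nat set \<Rightarrow> nat set \<Rightarrow> nat set \<Rightarrow> real" where
  "KeG n e0 e e' = (if e = e' then 1 else 0) - 2 * hh n e0 e * hh n e0 e' / (2 * (1 - 1 / sqrt (card (vpairs n))))"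

lemma hh_sq: assumes "e0 \<in> vpairs n"
  shows "(\<Sum>k\<in>vpairs n. hh n e0 k * hh n e0 k) = 2 * (1 - 1 / sqrt (card (vpairs n)))"
proof -
  define N where "N = real (card (vpairs n))"
  have Npos: "N > 0" unfolding N_def using assms finite_vpairs card_gt_0_iff by fastforce
  define c where "c = 1 / sqrt N"
  have cc: "c * c = 1 / N" unfolding c_def using Npos by (simp add: power2_eq_square[symmetric] power_divide)
  have "(\<Sum>k\<in>vpairs n. hh n e0 k * hh n e0 k) =
    (\<Sum>k\<in>vpairs n. (if k = e0 then 1 - 2 / sqrt N else 0) + 1 / N)"
    unfolding hh_def N_def[symmetric] c_def[symmetric]
  proof (intro sum.cong refl)
    fix k show "((if k = e0 then 1 else 0) - c) * ((if k = e0 then 1 else 0) - c) =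
      (if k = e0 then 1 - 2 / sqrt N else 0) + 1 / N"
      using cc unfolding c_def[symmetric] by (cases "k = e0") (auto simp: algebra_simps c_def)
  qed
  also have "\<dots> = 1 - 2 / sqrt N + N * (1 / N)"
    using assms finite_vpairs by (simp add: sum.distrib N_def)
  also have "\<dots> = 2 * (1 - 1 / sqrt N)" using Npos by (simp add: field_simps)
  finally show ?thesis unfolding N_def .
qed

lemma orthR_KeG: assumes "e0 \<in> vpairs n" shows "orthR (vpairs n) (KeG n e0)"
  unfolding orthR_def
proof (intro ballI)
  fix i j assume i: "i \<in> vpairs n" and j: "j \<in> vpairs n"
  define s where "s = 2 * (1 - 1 / sqrt (card (vpairs n)))"
  define w where "w = hh n e0"
  have ws: "(\<Sum>k\<in>vpairs n. w k * w k) = s" unfolding w_def s_def using hh_sq[OF assms] .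
  define X where "X = 4 * w i * w j / (s * s)"
  have "(\<Sum>k\<in>vpairs n. KeG n e0 k i * KeG n e0 k j) =
    (\<Sum>k\<in>vpairs n. (if k = i then (if i = j then 1 else 0) else 0) - (if k = i then 2 * w i * w j / s else 0)
      - (if k = j then 2 * w j * w i / s else 0) + (w k * w k) * X)"
    unfolding KeG_def w_def[symmetric] s_def[symmetric] X_def by (intro sum.cong) (auto simp: algebra_simps)
  also have "\<dots> = (if i = j then 1 else 0) - 2 * w i * w j / s - 2 * w j * w i / s + s * X"
    using i j finite_vpairs by (simp add: sum.distrib sum_subtractf ws sum_distrib_right[symmetric])
  also have "\<dots> = (if i = j then 1 else 0)"
    unfolding X_def by (cases "s = 0") (simp_all add: field_simps)
  finally show "(\<Sum>k\<in>vpairs n. KeG n e0 k i * KeG n e0 k j) = (if i = j then 1 else 0)" .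
qed

lemma KeG_col: assumes "e0 \<in> vpairs n" "e \<in> vpairs n"
  shows "KeG n e0 e e0 = 1 / sqrt (card (vpairs n))"
proof -
  define N where "N = real (card (vpairs n))"
  have N1: "N \<ge> 1" unfolding N_def using assms finite_vpairs
    by (metis One_nat_def Suc_leI card_gt_0_iff empty_iff of_nat_1 of_nat_le_iff)
  show ?thesis
  proof (cases "N = 1")
    case True
    hence "card (vpairs n) = 1" unfolding N_def by simp
    hence "e = e0" using assms by (metis card_1_singletonE singletonD)
    thus ?thesis using True unfolding KeG_def hh_def N_def[symmetric] by simp
  next
    case False
    hence "sqrt N > 1" using N1 by simp
    hence ne: "1 - 1 / sqrt N \<noteq> 0" by simp
    define c where "c = 1 / sqrt N"
    have "KeG n e0 e e0 = (if e = e0 then 1 else 0) - 2 * ((if e = e0 then 1 else 0) - c) * (1 - c) / (2 * (1 - c))"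
      unfolding KeG_def hh_def N_def[symmetric] c_def by simp
    also have "\<dots> = c" using ne unfolding c_def[symmetric] by (cases "e = e0") (simp_all add: field_simps)
    finally show ?thesis unfolding c_def N_def .
  qed
qed

definition I2 :: "bool \<Rightarrow> bool \<Rightarrow> real" where "I2 b b' = (if b = b' then 1 else 0)"
definition Hm :: "bool \<Rightarrow> bool \<Rightarrow> real" where
  "Hm b b' = (if b' then 1 / sqrt 2 else (if b then - 1 / sqrt 2 else 1 / sqrt 2))"
definition Hb :: "bool \<Rightarrow> bool \<Rightarrow> real" where "Hb b b' = Hm b' b"

lemma UNIV_bool_sum: "(\<Sum>b\<in>(UNIV::bool set). f b) = f True + f False"
  by (simp add: UNIV_bool add.commute)

lemma orthR_I2: "orthR UNIV I2" unfolding orthR_def I2_def by (auto simp: UNIV_bool_sum)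
lemma orthR_Hm: "orthR UNIV Hm" unfolding orthR_def Hm_def
  by (auto simp: UNIV_bool_sum power2_eq_square[symmetric] power_divide)
lemma orthR_Hb: "orthR UNIV Hb" unfolding orthR_def Hb_def Hm_def
  by (auto simp: UNIV_bool_sum power2_eq_square[symmetric] power_divide)


definition enc :: "(nat set \<times> bool) list \<Rightarrow> nat" where
  "enc h = list_encode (map (\<lambda>(e, b). prod_encode (set_encode e, of_bool b)) h)"

definition dec :: "nat \<Rightarrow> (nat set \<times> bool) list" where
  "dec z = map (\<lambda>k. case prod_decode k of (a, b) \<Rightarrow> (set_decode a, b \<noteq> 0)) (list_decode z)"

lemma dec_enc: "\<forall>x\<in>set h. finite (fst x) \<Longrightarrow> dec (enc h) = h"
  unfolding enc_def dec_def by (induction h) auto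

lemma vpairs_finite_elem: "e \<in> vpairs n \<Longrightarrow> finite e"
  unfolding vpairs_def by auto

definition e0 :: "nat set" where "e0 = {0, 1}"

lemma e0_vp: "2 \<le> n \<Longrightarrow> e0 \<in> vpairs n"
  unfolding vpairs_def e0_def by force

definition LLs :: "nat \<Rightarrow> nat \<Rightarrow> (nat set \<times> bool) list set" where
  "LLs n R = {h. set h \<subseteq> vpairs n \<times> UNIV \<and> length h \<le> R}"

lemma finite_LLs: "finite (LLs n R)"
  unfolding LLs_def by (rule finite_lists_length_le) (use finite_vpairs in auto)

lemma dec_enc_LLs: "h \<in> LLs n R \<Longrightarrow> dec (enc h) = h"
  by (rule dec_enc) (auto simp: LLs_def vpairs_finite_elem)

definition Wf :: "nat \<Rightarrow> nat \<Rightarrow> nat" where "Wf n R = Suc (Max (enc ` LLs n R))"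

lemma enc_lt_W: "h \<in> LLs n R \<Longrightarrow> enc h < Wf n R"
  unfolding Wf_def using finite_LLs by (simp add: le_imp_less_Suc)

lemma extend_bij:
  assumes "finite A" "D \<subseteq> A" "inj_on f D" "f ` D \<subseteq> A"
  shows "\<exists>g. bij_betw g A A \<and> (\<forall>x\<in>D. g x = f x)"
proof -
  have fD: "finite D" using assms finite_subset by blast
  have "card (A - D) = card (A - f ` D)"
    using assms fD by (simp add: card_Diff_subset card_image finite_subset)
  then obtain h where h: "bij_betw h (A - D) (A - f ` D)"
    using finite_same_card_bij[of "A - D" "A - f ` D"] assms by auto
  define g where "g x = (if x \<in> D then f x else h x)" for x
  have "bij_betw g A A"
  proof -
    have b1: "bij_betw g D (f ` D)" unfolding g_def using assms(3)
      by (simp add: bij_betw_def inj_on_def cong: image_cong)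
    have b2: "bij_betw g (A - D) (A - f ` D)" unfolding g_def using h
      by (rule bij_betw_cong[THEN iffD1, rotated]) auto
    have "bij_betw g (D \<union> (A - D)) (f ` D \<union> (A - f ` D))"
      by (rule bij_betw_combine[OF b1 b2]) auto
    moreover have "D \<union> (A - D) = A" "f ` D \<union> (A - f ` D) = A" using assms by auto
    ultimately show ?thesis by simp
  qed
  thus ?thesis unfolding g_def by auto
qed

definition fmap :: "idx \<Rightarrow> idx" where
  "fmap x = (case x of (e, b, z) \<Rightarrow> (e0, False, enc ((e, b) # dec z)))"

definition Dom :: "nat \<Rightarrow> nat \<Rightarrow> idx set" where
  "Dom n R = {(e, b, enc h) | e b h. e \<in> vpairs n \<and> h \<in> LLs n R \<and> length h < R}"

lemma DomE: "x \<in> Dom n R \<Longrightarrow> (\<And>e b h. x = (e, b, enc h) \<Longrightarrow> e \<in> vpairs n \<Longrightarrow> h \<in> LLs n R \<Longrightarrow> length h < R \<Longrightarrow> P) \<Longrightarrow> P"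
  unfolding Dom_def by blast

lemma Cons_LLs: "e \<in> vpairs n \<Longrightarrow> h \<in> LLs n R \<Longrightarrow> length h < R \<Longrightarrow> (e, b) # h \<in> LLs n R"
  unfolding LLs_def by auto

lemma fmap_Dom: "h \<in> LLs n R \<Longrightarrow> fmap (e, b, enc h) = (e0, False, enc ((e, b) # h))"
  unfolding fmap_def by (simp add: dec_enc_LLs)

lemma Dom_props:
  assumes "2 \<le> n"
  shows "Dom n R \<subseteq> qbasis n (Wf n R)" "inj_on fmap (Dom n R)" "fmap ` Dom n R \<subseteq> qbasis n (Wf n R)"
proof -
  show "Dom n R \<subseteq> qbasis n (Wf n R)"
  proof
    fix x assume "x \<in> Dom n R"
    then show "x \<in> qbasis n (Wf n R)"
    proof (rule DomE)
      fix e b h assume "x = (e, b, enc h)" "e \<in> vpairs n" "h \<in> LLs n R"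
      then show ?thesis unfolding qbasis_def using enc_lt_W[of h n R] by simp
    qed
  qed
  show "inj_on fmap (Dom n R)"
  proof (rule inj_onI)
    fix x y assume x0: "x \<in> Dom n R" and y0: "y \<in> Dom n R" and eq0: "fmap x = fmap y"
    obtain e b h where x: "x = (e, b, enc h)" "e \<in> vpairs n" "h \<in> LLs n R" "length h < R"
      using x0 by (rule DomE)
    obtain e' b' h' where y: "y = (e', b', enc h')" "e' \<in> vpairs n" "h' \<in> LLs n R" "length h' < R"
      using y0 by (rule DomE)
    have eq: "enc ((e, b) # h) = enc ((e', b') # h')"
      using eq0 unfolding x(1) y(1) fmap_Dom[OF x(3)] fmap_Dom[OF y(3)] by simp
    have "(e, b) # h \<in> LLs n R" "(e', b') # h' \<in> LLs n R"
      using x y by (simp_all add: Cons_LLs)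
    hence d: "dec (enc ((e, b) # h)) = (e, b) # h" "dec (enc ((e', b') # h')) = (e', b') # h'"
      by (simp_all only: dec_enc_LLs)
    have "(e, b) # h = (e', b') # h'" using d eq by metis
    then show "x = y" using x(1) y(1) by simp
  qed
  show "fmap ` Dom n R \<subseteq> qbasis n (Wf n R)"
  proof
    fix y assume "y \<in> fmap ` Dom n R"
    then obtain x where x0: "x \<in> Dom n R" and y0: "y = fmap x" by blast
    obtain e b h where x: "x = (e, b, enc h)" "e \<in> vpairs n" "h \<in> LLs n R" "length h < R"
      using x0 by (rule DomE)
    have h1: "(e, b) # h \<in> LLs n R" using x by (simp add: Cons_LLs)
    have "y = (e0, False, enc ((e, b) # h))" using y0 x(1) fmap_Dom[OF x(3)] by simp
    then show "y \<in> qbasis n (Wf n R)"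
      unfolding qbasis_def using e0_vp[OF assms] enc_lt_W[OF h1] by simp
  qed
qed

definition gperm :: "nat \<Rightarrow> nat \<Rightarrow> idx \<Rightarrow> idx" where
  "gperm n R = (SOME g. bij_betw g (qbasis n (Wf n R)) (qbasis n (Wf n R)) \<and> (\<forall>x\<in>Dom n R. g x = fmap x))"

lemma gperm:
  assumes "2 \<le> n"
  shows "bij_betw (gperm n R) (qbasis n (Wf n R)) (qbasis n (Wf n R))"
    "\<forall>x\<in>Dom n R. gperm n R x = fmap x"
proof -
  have "\<exists>g. bij_betw g (qbasis n (Wf n R)) (qbasis n (Wf n R)) \<and> (\<forall>x\<in>Dom n R. g x = fmap x)"
    using extend_bij[OF finite_qbasis Dom_props[OF assms]] .
  from someI_ex[OF this] show "bij_betw (gperm n R) (qbasis n (Wf n R)) (qbasis n (Wf n R))"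
    "\<forall>x\<in>Dom n R. gperm n R x = fmap x" unfolding gperm_def by auto
qed


definition cm :: "('a \<Rightarrow> 'a \<Rightarrow> real) \<Rightarrow> 'a \<Rightarrow> 'a \<Rightarrow> complex" where
  "cm A = (\<lambda>i j. complex_of_real (A i j))"

definition Iv :: "nat set \<Rightarrow> nat set \<Rightarrow> real" where "Iv e e' = (if e = e' then 1 else 0)"

lemma orthR_Iv: "finite S \<Longrightarrow> orthR S Iv"
proof -
  have "\<And>k i j. Iv k i * Iv k j = (if k = i then (if i = j then 1 else 0) else 0)"
    by (simp add: Iv_def)
  then show "finite S \<Longrightarrow> orthR S Iv" unfolding orthR_def by simp
qed

definition Kmat :: "nat \<Rightarrow> nat \<Rightarrow> qmat" where
  "Kmat n R = tens n (Wf n R) (cm (KeG n e0)) (cm Hm)"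
definition KPmat :: "nat \<Rightarrow> nat \<Rightarrow> qmat" where
  "KPmat n R = (\<lambda>i j. Kmat n R i (gperm n R j))"
definition Gop :: "nat \<Rightarrow> nat \<Rightarrow> qmat" where
  "Gop n R = tens n (Wf n R) (cm (DmG n)) (cm I2)"
definition Hop :: "nat \<Rightarrow> nat \<Rightarrow> qmat" where
  "Hop n R = tens n (Wf n R) (cm Iv) (cm Hb)"
definition trial :: "nat \<Rightarrow> nat \<Rightarrow> nat \<Rightarrow> qmat list" where
  "trial n R t = replicate t (Gop n R) @ [Hop n R, KPmat n R]"
definition algo :: "nat \<Rightarrow> nat \<Rightarrow> nat \<Rightarrow> qmat list" where
  "algo n R t = Kmat n R # concat (replicate R (trial n R t))"
definition s0 :: idx where "s0 = (e0, False, enc [])"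

lemma length_algo: "length (algo n R t) - 1 = R * (t + 2)"
  unfolding algo_def trial_def by (simp add: length_concat sum_list_replicate)

lemma s0_in: "2 \<le> n \<Longrightarrow> s0 \<in> qbasis n (Wf n R)"
  unfolding s0_def qbasis_def using e0_vp[of n] enc_lt_W[of "[]" n R] by (simp add: LLs_def)

lemma W_pos: "Wf n R > 0" unfolding Wf_def by simp

lemma Kmat_unitary: "2 \<le> n \<Longrightarrow> unitary_on (qbasis n (Wf n R)) (Kmat n R)"
  unfolding Kmat_def cm_def
  by (intro orth_tens orthR_orth orthR_KeG orthR_Hm e0_vp)

lemma Gop_unitary: "unitary_on (qbasis n (Wf n R)) (Gop n R)"
  unfolding Gop_def cm_def by (intro orth_tens orthR_orth orthR_DmG orthR_I2)

lemma Hop_unitary: "unitary_on (qbasis n (Wf n R)) (Hop n R)"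
  unfolding Hop_def cm_def by (intro orth_tens orthR_orth orthR_Iv orthR_Hb finite_vpairs)

lemma KPmat_unitary:
  assumes "2 \<le> n" shows "unitary_on (qbasis n (Wf n R)) (KPmat n R)"
  unfolding unitary_on_def
proof (intro ballI)
  fix i j assume i: "i \<in> qbasis n (Wf n R)" and j: "j \<in> qbasis n (Wf n R)"
  have g: "bij_betw (gperm n R) (qbasis n (Wf n R)) (qbasis n (Wf n R))" using gperm(1)[OF assms] .
  have gi: "gperm n R i \<in> qbasis n (Wf n R)" and gj: "gperm n R j \<in> qbasis n (Wf n R)"
    using g i j by (auto dest: bij_betwE)
  have "(\<Sum>k\<in>qbasis n (Wf n R). cnj (KPmat n R k i) * KPmat n R k j)
      = (if gperm n R i = gperm n R j then 1 else 0)"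
    using Kmat_unitary[OF assms] gi gj unfolding unitary_on_def KPmat_def by blast
  also have "\<dots> = (if i = j then 1 else 0)"
    using g i j by (auto simp: bij_betw_def inj_on_def)
  finally show "(\<Sum>k\<in>qbasis n (Wf n R). cnj (KPmat n R k i) * KPmat n R k j) = (if i = j then 1 else 0)" .
qed

lemma algo_unitary:
  assumes "2 \<le> n" shows "\<forall>U\<in>set (algo n R t). unitary_on (qbasis n (Wf n R)) U"
  unfolding algo_def trial_def
  using Kmat_unitary[OF assms] KPmat_unitary[OF assms] Gop_unitary Hop_unitary
  by (auto simp: set_replicate_conv_if)


definition u0 :: "nat \<Rightarrow> nat set \<Rightarrow> complex" where
  "u0 n = (\<lambda>e. complex_of_real (1 / sqrt (card (vpairs n))))"

lemma ps_cong: "(\<forall>e\<in>vpairs n. f e = f' e) \<Longrightarrow> (\<forall>b. g b = g' b) \<Longrightarrow> ps n W f g z = ps n W f' g' z"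
  unfolding ps_def by (rule ext) auto

lemma app_ket: "s \<in> B \<Longrightarrow> finite B \<Longrightarrow> app B U (ket s) = (\<lambda>i. U i s)"
  unfolding app_def ket_def by (simp add: if_distrib cong: if_cong)

lemma tens_col: "e0' \<in> vpairs n \<Longrightarrow> z0 < W \<Longrightarrow>
  tens n W A H i (e0', b0, z0) = ps n W (\<lambda>e. A e e0') (\<lambda>b. H b b0) z0 i"
  unfolding tens_def ps_def by (cases i) auto

lemma Hm_mn: "cm Hm b False = mn b"
  by (cases b) (simp_all add: cm_def Hm_def mn_def)

lemma K_col: "2 \<le> n \<Longrightarrow> z0 < Wf n R \<Longrightarrow> Kmat n R i (e0, False, z0) = ps n (Wf n R) (u0 n) mn z0 i"
  unfolding Kmat_def
  by (subst tens_col) (auto intro!: e0_vp ps_cong[THEN fun_cong] simp: Hm_mn[unfolded cm_def] cm_def KeG_col e0_vp u0_def)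

lemma start: "2 \<le> n \<Longrightarrow> app (qbasis n (Wf n R)) (Kmat n R) (ket s0) = ps n (Wf n R) (u0 n) mn (enc [])"
  by (rule ext, subst app_ket) (auto simp: s0_in[unfolded s0_def] finite_qbasis s0_def K_col enc_lt_W LLs_def)

lemma I2_mn: "(\<Sum>b'\<in>UNIV. cm I2 b b' * mn b') = mn b"
  by (cases b) (auto simp: UNIV_bool_sum cm_def I2_def)

lemma Hb_mn: "(\<Sum>b'\<in>UNIV. cm Hb b b' * mn b') = dF b"
proof -
  have s: "complex_of_real (sqrt 2) * complex_of_real (sqrt 2) = 2"
    by (simp flip: of_real_mult)
  show ?thesis
    by (cases b) (auto simp: UNIV_bool_sum cm_def Hb_def Hm_def mn_def dF_def field_simps s)
qed

lemma Iv_sum: "e \<in> S \<Longrightarrow> finite S \<Longrightarrow> (\<Sum>e'\<in>S. cm Iv e e' * f e') = f e"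
proof -
  have "\<And>e'. cm Iv e e' * f e' = (if e = e' then f e else 0)" by (simp add: cm_def Iv_def)
  then show "e \<in> S \<Longrightarrow> finite S \<Longrightarrow> (\<Sum>e'\<in>S. cm Iv e e' * f e') = f e" by simp
qed

context grovE
begin

lemma Dm_cm: "Dm = cm (DmG n)"
  unfolding Dm_def cm_def DmG_def Ndef[symmetric] by (intro ext) simp

lemma f0_u0: "f0 = u0 n"
  unfolding f0_def u0_def Ndef[symmetric] ..

lemma Gop_step:
  "app (qbasis n (Wf n R)) (Gop n R) (query_op E (ps n (Wf n R) f mn z)) = ps n (Wf n R) (Gf f) mn z"
  unfolding query_mn Gop_def app_tens
  by (rule ps_cong) (auto simp: Gf_def Dm_cm I2_mn)

lemma Grover_run:
  "runq (qbasis n (Wf n R)) E (replicate t (Gop n R)) (ps n (Wf n R) f mn z) = ps n (Wf n R) ((Gf ^^ t) f) mn z"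
proof (induction t arbitrary: f)
  case 0 then show ?case by simp
next
  case (Suc t)
  show ?case by (simp add: Gop_step Suc.IH funpow_Suc_right del: funpow.simps)
qed

lemma Hop_step:
  "app (qbasis n (Wf n R)) (Hop n R) (query_op E (ps n (Wf n R) f mn z)) = ps n (Wf n R) (\<lambda>e. sg E e * f e) dF z"
  unfolding query_mn Hop_def app_tens
  by (rule ps_cong) (auto simp: Iv_sum finite_vpairs Hb_mn)

lemma KP_step:
  assumes n2: "2 \<le> n" and h: "h \<in> LLs n R" "length h < R"
  shows "app (qbasis n (Wf n R)) (KPmat n R) (query_op E (ps n (Wf n R) f dF (enc h))) =
    (\<lambda>i. \<Sum>e\<in>vpairs n. f e * ps n (Wf n R) (u0 n) mn (enc ((e, e \<in> E) # h)) i)"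
proof (rule ext)
  fix i
  let ?W = "Wf n R"
  have zW: "enc h < ?W" using h by (simp add: enc_lt_W)
  have "app (qbasis n ?W) (KPmat n R) (query_op E (ps n ?W f dF (enc h))) i =
     (\<Sum>e\<in>vpairs n. \<Sum>b\<in>UNIV. \<Sum>z<?W. KPmat n R i (e, b, z) * qv n ?W E f (enc h) (e, b, z))"
    unfolding query_dF app_def sum_qbasis ..
  also have "\<dots> = (\<Sum>e\<in>vpairs n. \<Sum>b\<in>UNIV. (if b = (e \<in> E) then KPmat n R i (e, e \<in> E, enc h) * f e else 0))"
  proof (intro sum.cong refl)
    fix e b assume e: "e \<in> vpairs n"
    show "(\<Sum>z<?W. KPmat n R i (e, b, z) * qv n ?W E f (enc h) (e, b, z)) =
      (if b = (e \<in> E) then KPmat n R i (e, e \<in> E, enc h) * f e else 0)"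
    proof (cases "b = (e \<in> E)")
      case True
      have "(\<Sum>z<?W. KPmat n R i (e, b, z) * qv n ?W E f (enc h) (e, b, z)) =
         (\<Sum>z<?W. if z = enc h then KPmat n R i (e, e \<in> E, enc h) * f e else 0)"
        using True e zW by (intro sum.cong refl) (auto simp: qv_def)
      also have "\<dots> = KPmat n R i (e, e \<in> E, enc h) * f e" using zW by simp
      finally show ?thesis using True by simp
    next
      case False
      then show ?thesis by (auto simp: qv_def intro!: sum.neutral)
    qed
  qed
  also have "\<dots> = (\<Sum>e\<in>vpairs n. KPmat n R i (e, e \<in> E, enc h) * f e)"
    by simp
  also have "\<dots> = (\<Sum>e\<in>vpairs n. f e * ps n ?W (u0 n) mn (enc ((e, e \<in> E) # h)) i)"
  proof (intro sum.cong refl)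
    fix e assume e: "e \<in> vpairs n"
    have "(e, e \<in> E, enc h) \<in> Dom n R" unfolding Dom_def using e h by blast
    hence "gperm n R (e, e \<in> E, enc h) = (e0, False, enc ((e, e \<in> E) # h))"
      using gperm(2)[OF n2] fmap_Dom[OF h(1)] by simp
    moreover have "enc ((e, e \<in> E) # h) < ?W" using e h by (intro enc_lt_W Cons_LLs)
    ultimately show "KPmat n R i (e, e \<in> E, enc h) * f e = f e * ps n ?W (u0 n) mn (enc ((e, e \<in> E) # h)) i"
      unfolding KPmat_def using K_col[OF n2] by simp
  qed
  finally show "app (qbasis n ?W) (KPmat n R) (query_op E (ps n ?W f dF (enc h))) i =
    (\<Sum>e\<in>vpairs n. f e * ps n ?W (u0 n) mn (enc ((e, e \<in> E) # h)) i)" .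
qed

definition fT :: "nat \<Rightarrow> nat set \<Rightarrow> complex" where "fT t = (\<lambda>e. sg E e * (Gf ^^ t) f0 e)"

lemma trial_step:
  assumes n2: "2 \<le> n" and h: "h \<in> LLs n R" "length h < R"
  shows "runq (qbasis n (Wf n R)) E (trial n R t) (ps n (Wf n R) (u0 n) mn (enc h)) =
    (\<lambda>i. \<Sum>e\<in>vpairs n. fT t e * ps n (Wf n R) (u0 n) mn (enc ((e, e \<in> E) # h)) i)"
  unfolding trial_def runq_append Grover_run
  by (simp add: Hop_step KP_step[OF assms] fT_def f0_u0)

end


definition Lt :: "nat \<Rightarrow> nat \<Rightarrow> nat set list set" where
  "Lt n j = {h. set h \<subseteq> vpairs n \<and> length h = j}"

lemma Lt_0: "Lt n 0 = {[]}" unfolding Lt_def by auto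

lemma Lt_Suc: "Lt n (Suc j) = (\<lambda>(e, h). e # h) ` (vpairs n \<times> Lt n j)"
  unfolding Lt_def by (auto simp: length_Suc_conv image_iff)

lemma finite_Lt: "finite (Lt n j)"
  unfolding Lt_def by (rule finite_lists_length_eq) (rule finite_vpairs)

lemma sum_Lt_Suc: "(\<Sum>h\<in>Lt n (Suc j). F h) = (\<Sum>e\<in>vpairs n. \<Sum>h\<in>Lt n j. F (e # h))"
proof -
  have "inj_on (\<lambda>(e, h). e # h) (vpairs n \<times> Lt n j)" by (auto simp: inj_on_def)
  hence "(\<Sum>h\<in>Lt n (Suc j). F h) = (\<Sum>x\<in>vpairs n \<times> Lt n j. F (case x of (e, h) \<Rightarrow> e # h))"
    unfolding Lt_Suc by (simp add: sum.reindex)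
  also have "\<dots> = (\<Sum>e\<in>vpairs n. \<Sum>h\<in>Lt n j. F (e # h))"
    by (simp add: sum.cartesian_product split_def)
  finally show ?thesis .
qed

context grovE
begin

definition lab :: "nat set list \<Rightarrow> (nat set \<times> bool) list" where
  "lab h = map (\<lambda>e. (e, e \<in> E)) h"

definition Amp :: "nat \<Rightarrow> nat set list \<Rightarrow> complex" where
  "Amp t h = prod_list (map (fT t) h)"

definition Phi :: "nat \<Rightarrow> nat \<Rightarrow> nat \<Rightarrow> qstate" where
  "Phi R t j = (\<lambda>i. \<Sum>h\<in>Lt n j. Amp t h * ps n (Wf n R) (u0 n) mn (enc (lab h)) i)"

lemma lab_LLs: "h \<in> Lt n j \<Longrightarrow> j \<le> R \<Longrightarrow> lab h \<in> LLs n R"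
  unfolding Lt_def LLs_def lab_def by auto

lemma Phi_0: "Phi R t 0 = ps n (Wf n R) (u0 n) mn (enc [])"
  unfolding Phi_def Lt_0 by (simp add: Amp_def lab_def)

lemma Phi_step:
  assumes n2: "2 \<le> n" and j: "j < R"
  shows "runq (qbasis n (Wf n R)) E (trial n R t) (Phi R t j) = Phi R t (Suc j)"
proof -
  have "runq (qbasis n (Wf n R)) E (trial n R t) (Phi R t j) =
    (\<lambda>i. \<Sum>h\<in>Lt n j. Amp t h * runq (qbasis n (Wf n R)) E (trial n R t) (ps n (Wf n R) (u0 n) mn (enc (lab h))) i)"
    unfolding Phi_def by (rule runq_lin)
  also have "\<dots> = (\<lambda>i. \<Sum>h\<in>Lt n j. Amp t h * (\<Sum>e\<in>vpairs n. fT t e * ps n (Wf n R) (u0 n) mn (enc ((e, e \<in> E) # lab h)) i))"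
  proof (intro ext sum.cong refl)
    fix i h assume h: "h \<in> Lt n j"
    have "lab h \<in> LLs n R" "length (lab h) < R" using h j lab_LLs[of h j R]
      by (auto simp: Lt_def lab_def)
    then show "Amp t h * runq (qbasis n (Wf n R)) E (trial n R t) (ps n (Wf n R) (u0 n) mn (enc (lab h))) i =
      Amp t h * (\<Sum>e\<in>vpairs n. fT t e * ps n (Wf n R) (u0 n) mn (enc ((e, e \<in> E) # lab h)) i)"
      by (simp add: trial_step[OF n2])
  qed
  also have "\<dots> = Phi R t (Suc j)"
    unfolding Phi_def sum_Lt_Suc
    by (rule ext) (simp add: sum_distrib_left Amp_def lab_def mult_ac sum.swap[of _ "Lt n j"])
  finally show ?thesis .
qed

lemma Phi_iter:
  assumes n2: "2 \<le> n"
  shows "j + k \<le> R \<Longrightarrow> runq (qbasis n (Wf n R)) E (concat (replicate k (trial n R t))) (Phi R t j) = Phi R t (j + k)"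
proof (induction k arbitrary: j)
  case 0 then show ?case by simp
next
  case (Suc k)
  have "runq (qbasis n (Wf n R)) E (concat (replicate (Suc k) (trial n R t))) (Phi R t j) =
    runq (qbasis n (Wf n R)) E (concat (replicate k (trial n R t))) (Phi R t (Suc j))"
    using Suc.prems by (simp add: runq_append Phi_step[OF n2])
  also have "\<dots> = Phi R t (Suc j + k)" using Suc.prems by (intro Suc.IH) simp
  finally show ?case by simp
qed

lemma run_algo:
  assumes n2: "2 \<le> n"
  shows "run (qbasis n (Wf n R)) E (algo n R t) (ket s0) = Phi R t R"
  unfolding algo_def run_Cons start[OF n2] Phi_0[of R t, symmetric]
  using Phi_iter[OF n2, of 0 R] by simp

end


definition cnt :: "nat \<Rightarrow> (nat set \<times> bool) list \<Rightarrow> nat" where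
  "cnt v hs = length (filter (\<lambda>(e, b). b \<and> v \<in> e) hs)"

definition vhat :: "nat \<Rightarrow> real \<Rightarrow> (nat set \<times> bool) list \<Rightarrow> nat set" where
  "vhat n \<tau> hs = {v. v < n \<and> \<tau> \<le> real (cnt v hs)}"

definition outf :: "nat \<Rightarrow> real \<Rightarrow> idx \<Rightarrow> nat set" where
  "outf n \<tau> = (\<lambda>(e, b, z). vhat n \<tau> (dec z))"

lemma sq_delta:
  assumes "inj_on c L" "finite L"
  shows "(cmod (\<Sum>h\<in>L. A h * (if z = c h then 1 else 0)))\<^sup>2 = (\<Sum>h\<in>L. if z = c h then (cmod (A h))\<^sup>2 else 0)"
proof (cases "\<exists>h0\<in>L. z = c h0")
  case True
  then obtain h0 where h0: "h0 \<in> L" "z = c h0" by blast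
  have eq: "\<And>h. h \<in> L \<Longrightarrow> (z = c h) = (h = h0)" using assms(1) h0 by (auto simp: inj_on_def)
  have "(\<Sum>h\<in>L. A h * (if z = c h then 1 else 0)) = (\<Sum>h\<in>L. if h = h0 then A h else 0)"
    by (intro sum.cong refl) (simp add: eq)
  moreover have "(\<Sum>h\<in>L. if z = c h then (cmod (A h))\<^sup>2 else 0) = (\<Sum>h\<in>L. if h = h0 then (cmod (A h))\<^sup>2 else 0)"
    by (intro sum.cong refl) (simp add: eq)
  ultimately show ?thesis using h0 assms(2) by simp
next
  case False
  then show ?thesis by (auto intro!: sum.neutral)
qed

context grovE
begin

lemma cmod_u0: "e \<in> vpairs n \<Longrightarrow> (cmod (u0 n e))\<^sup>2 = 1 / real (card (vpairs n))"
proof -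
  have "cmod (u0 n e) = 1 / sqrt (real (card (vpairs n)))" unfolding u0_def norm_of_real by simp
  then show ?thesis by (simp add: power_divide)
qed

lemma cmod_mn: "(cmod (mn b))\<^sup>2 = 1 / 2"
  unfolding mn_def by (simp add: power_divide norm_divide)

lemma Phi_val:
  assumes "e \<in> vpairs n"
  shows "Phi R t R (e, b, z) = u0 n e * mn b * (\<Sum>h\<in>Lt n R. Amp t h * (if z = enc (lab h) then 1 else 0))"
proof -
  have "Phi R t R (e, b, z) = (\<Sum>h\<in>Lt n R. u0 n e * mn b * (Amp t h * (if z = enc (lab h) then 1 else 0)))"
    unfolding Phi_def
  proof (intro sum.cong refl)
    fix h assume h: "h \<in> Lt n R"
    have "enc (lab h) < Wf n R" using lab_LLs[OF h, of R] enc_lt_W by simp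
    then show "Amp t h * ps n (Wf n R) (u0 n) mn (enc (lab h)) (e, b, z) =
      u0 n e * mn b * (Amp t h * (if z = enc (lab h) then 1 else 0))"
      using assms unfolding ps_def by simp
  qed
  then show ?thesis by (simp add: sum_distrib_left)
qed

lemma inj_enc_lab: "inj_on (\<lambda>h. enc (lab h)) (Lt n R)"
proof (rule inj_onI)
  fix h h' assume h: "h \<in> Lt n R" and h': "h' \<in> Lt n R" and eq: "enc (lab h) = enc (lab h')"
  have "lab h = lab h'" using eq dec_enc_LLs[OF lab_LLs[OF h order_refl]] dec_enc_LLs[OF lab_LLs[OF h' order_refl]] by metis
  moreover have "\<And>x. map fst (lab x) = x" by (simp add: lab_def comp_def)
  ultimately show "h = h'" by metis
qed

lemma out_prob_eq:
  assumes n2: "2 \<le> n"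
  shows "out_prob (qbasis n (Wf n R)) E (algo n R t) s0 (outf n \<tau>) P =
    (\<Sum>h\<in>Lt n R. if P (vhat n \<tau> (lab h)) then (cmod (Amp t h))\<^sup>2 else 0)"
proof -
  let ?W = "Wf n R"
  let ?S = "\<lambda>z. \<Sum>h\<in>Lt n R. Amp t h * (if z = enc (lab h) then 1 else 0)"
  let ?Q = "\<lambda>z. if P (vhat n \<tau> (dec z)) then (cmod (?S z))\<^sup>2 else 0"
  have Nne: "real (card (vpairs n)) \<noteq> 0" using e0_vp[OF n2] finite_vpairs by (auto simp: card_eq_0_iff)
  have pt: "(if P (outf n \<tau> (e, b, z)) then (cmod (Phi R t R (e, b, z)))\<^sup>2 else 0) =
      (1 / real (card (vpairs n))) * (1 / 2) * ?Q z" if e: "e \<in> vpairs n" for e b z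
  proof -
    have "(cmod (Phi R t R (e, b, z)))\<^sup>2 = (1 / real (card (vpairs n))) * (1 / 2) * (cmod (?S z))\<^sup>2"
      unfolding Phi_val[OF e] norm_mult power_mult_distrib cmod_u0[OF e] cmod_mn ..
    then show ?thesis unfolding outf_def by simp
  qed
  have "out_prob (qbasis n ?W) E (algo n R t) s0 (outf n \<tau>) P =
     (\<Sum>j\<in>qbasis n ?W. if P (outf n \<tau> j) then (cmod (Phi R t R j))\<^sup>2 else 0)"
    unfolding out_prob_def run_algo[OF n2] by (simp add: sum.inter_filter finite_qbasis)
  also have "\<dots> = (\<Sum>e\<in>vpairs n. \<Sum>b\<in>(UNIV::bool set). \<Sum>z<?W. (1 / real (card (vpairs n))) * (1 / 2) * ?Q z)"
    unfolding sum_qbasis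
  proof (rule sum.cong[OF refl])
    fix e assume e: "e \<in> vpairs n"
    show "(\<Sum>b\<in>UNIV. \<Sum>z<?W. if P (outf n \<tau> (e, b, z)) then (cmod (Phi R t R (e, b, z)))\<^sup>2 else 0) =
      (\<Sum>b\<in>(UNIV::bool set). \<Sum>z<?W. (1 / real (card (vpairs n))) * (1 / 2) * ?Q z)"
      by (simp only: pt[OF e])
  qed
  also have "\<dots> = (\<Sum>z<?W. ?Q z)"
    using Nne by (simp add: sum_distrib_left[symmetric] card_UNIV_bool sum_divide_distrib[symmetric])
  also have "\<dots> = (\<Sum>z<?W. \<Sum>h\<in>Lt n R. if z = enc (lab h) then (if P (vhat n \<tau> (lab h)) then (cmod (Amp t h))\<^sup>2 else 0) else 0)"
  proof (intro sum.cong refl)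
    fix z
    have "?Q z = (if P (vhat n \<tau> (dec z)) then (\<Sum>h\<in>Lt n R. if z = enc (lab h) then (cmod (Amp t h))\<^sup>2 else 0) else 0)"
      by (simp add: sq_delta[OF inj_enc_lab finite_Lt])
    also have "\<dots> = (\<Sum>h\<in>Lt n R. if z = enc (lab h) then (if P (vhat n \<tau> (lab h)) then (cmod (Amp t h))\<^sup>2 else 0) else 0)"
    proof (cases "P (vhat n \<tau> (dec z))")
      case True
      show ?thesis unfolding if_P[OF True]
      proof (intro sum.cong refl)
        fix h assume h: "h \<in> Lt n R"
        show "(if z = enc (lab h) then (cmod (Amp t h))\<^sup>2 else 0) =
          (if z = enc (lab h) then (if P (vhat n \<tau> (lab h)) then (cmod (Amp t h))\<^sup>2 else 0) else 0)"
          using dec_enc_LLs[OF lab_LLs[OF h order_refl]] True by auto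
      qed
    next
      case False
      show ?thesis unfolding if_not_P[OF False]
      proof (intro sum.neutral[symmetric] ballI)
        fix h assume h: "h \<in> Lt n R"
        show "(if z = enc (lab h) then (if P (vhat n \<tau> (lab h)) then (cmod (Amp t h))\<^sup>2 else 0) else 0) = 0"
          using dec_enc_LLs[OF lab_LLs[OF h order_refl]] False by auto
      qed
    qed
    finally show "?Q z = \<dots>" .
  qed
  also have "\<dots> = (\<Sum>h\<in>Lt n R. \<Sum>z<?W. if z = enc (lab h) then (if P (vhat n \<tau> (lab h)) then (cmod (Amp t h))\<^sup>2 else 0) else 0)"
    by (rule sum.swap)
  also have "\<dots> = (\<Sum>h\<in>Lt n R. if P (vhat n \<tau> (lab h)) then (cmod (Amp t h))\<^sup>2 else 0)"
  proof (intro sum.cong refl)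
    fix h assume h: "h \<in> Lt n R"
    have "enc (lab h) < ?W" using lab_LLs[OF h, of R] enc_lt_W by simp
    then show "(\<Sum>z<?W. if z = enc (lab h) then (if P (vhat n \<tau> (lab h)) then (cmod (Amp t h))\<^sup>2 else 0) else 0) =
      (if P (vhat n \<tau> (lab h)) then (cmod (Amp t h))\<^sup>2 else 0)" by simp
  qed
  finally show ?thesis .
qed

end


lemma sum_prod_Lt: "(\<Sum>h\<in>Lt n j. prod_list (map f h)) = (\<Sum>e\<in>vpairs n. f e :: real) ^ j"
proof (induction j)
  case 0 then show ?case by (simp add: Lt_0)
next
  case (Suc j)
  show ?case unfolding sum_Lt_Suc
    by (simp add: Suc.IH[symmetric] sum_product)
qed

lemma markov_sum:
  fixes Wt g :: "'a \<Rightarrow> real"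
  assumes "finite L" "\<forall>h\<in>L. 0 \<le> Wt h" "\<forall>h\<in>L. P h \<longrightarrow> 1 \<le> g h" "\<forall>h\<in>L. 0 \<le> g h"
  shows "(\<Sum>h\<in>L. if P h then Wt h else 0) \<le> (\<Sum>h\<in>L. Wt h * g h)"
proof (rule sum_mono)
  fix h assume h: "h \<in> L"
  show "(if P h then Wt h else 0) \<le> Wt h * g h"
  proof (cases "P h")
    case True
    then have "Wt h * 1 \<le> Wt h * g h" using assms h by (intro mult_left_mono) auto
    then show ?thesis using True by simp
  next
    case False then show ?thesis using assms h by simp
  qed
qed

lemma exp_sum_list: fixes \<mu> :: real and X :: "'a \<Rightarrow> real" shows "exp (\<mu> * sum_list (map X h)) = prod_list (map (\<lambda>e. exp (\<mu> * X e)) h)"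
proof (induction h)
  case Nil then show ?case by simp
next
  case (Cons b h)
  have "exp (\<mu> * sum_list (map X (b # h))) = exp (\<mu> * X b) * exp (\<mu> * sum_list (map X h))"
    by (simp add: distrib_left flip: exp_add)
  then show ?case using Cons.IH by simp
qed

lemma chernoff:
  fixes w :: "nat set \<Rightarrow> real" and Q :: "nat set \<Rightarrow> bool" and n R :: nat and \<mu> a :: real
  defines "X \<equiv> (\<lambda>e. if Q e then 1 else 0 :: real)"
  defines "q \<equiv> (\<Sum>e\<in>vpairs n. if Q e then w e else 0)"
  assumes w0: "\<forall>e\<in>vpairs n. 0 \<le> w e" and w1: "(\<Sum>e\<in>vpairs n. w e) = 1"
    and P: "\<forall>h. P h \<longrightarrow> 0 \<le> \<mu> * (sum_list (map X h) - a)"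
  shows "(\<Sum>h\<in>Lt n R. if P h then prod_list (map w h) else 0) \<le> exp (- \<mu> * a + real R * q * (exp \<mu> - 1))"
proof -
  have pos: "\<forall>h\<in>Lt n R. 0 \<le> prod_list (map w h)"
    using w0 unfolding Lt_def by (auto intro!: prod_list_nonneg simp: subset_iff)
  have "(\<Sum>h\<in>Lt n R. if P h then prod_list (map w h) else 0) \<le>
      (\<Sum>h\<in>Lt n R. prod_list (map w h) * exp (\<mu> * (sum_list (map X h) - a)))"
    using P pos by (intro markov_sum finite_Lt) auto
  also have "\<dots> = exp (- \<mu> * a) * (\<Sum>h\<in>Lt n R. prod_list (map (\<lambda>e. w e * exp (\<mu> * X e)) h))"
  proof -
    have "\<And>h. prod_list (map w h) * exp (\<mu> * (sum_list (map X h) - a)) =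
       exp (- \<mu> * a) * prod_list (map (\<lambda>e. w e * exp (\<mu> * X e)) h)"
    proof -
      fix h
      have "exp (\<mu> * (sum_list (map X h) - a)) = exp (- \<mu> * a) * exp (\<mu> * sum_list (map X h))"
        by (simp add: right_diff_distrib exp_diff exp_minus field_simps)
      moreover have "prod_list (map (\<lambda>e. w e * exp (\<mu> * X e)) h) = prod_list (map w h) * prod_list (map (\<lambda>e. exp (\<mu> * X e)) h)"
        by (induction h) auto
      ultimately show "prod_list (map w h) * exp (\<mu> * (sum_list (map X h) - a)) =
       exp (- \<mu> * a) * prod_list (map (\<lambda>e. w e * exp (\<mu> * X e)) h)"
        by (simp add: exp_sum_list)
    qed
    then show ?thesis by (simp add: sum_distrib_left)
  qed
  also have "\<dots> = exp (- \<mu> * a) * (1 + q * (exp \<mu> - 1)) ^ R"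
  proof -
    have "(\<Sum>e\<in>vpairs n. w e * exp (\<mu> * X e)) = (\<Sum>e\<in>vpairs n. w e + (if Q e then w e else 0) * (exp \<mu> - 1))"
      unfolding X_def by (intro sum.cong) (auto simp: algebra_simps)
    also have "\<dots> = 1 + q * (exp \<mu> - 1)" unfolding q_def
      by (simp add: sum.distrib w1 sum_distrib_right)
    finally show ?thesis by (simp add: sum_prod_Lt)
  qed
  also have "\<dots> \<le> exp (- \<mu> * a) * exp (q * (exp \<mu> - 1)) ^ R"
  proof -
    have "q \<le> (\<Sum>e\<in>vpairs n. w e)" unfolding q_def using w0 by (intro sum_mono) auto
    hence q1: "q \<le> 1" using w1 by simp
    have q0: "0 \<le> q" unfolding q_def using w0 by (auto intro!: sum_nonneg)
    have "0 \<le> 1 + q * (exp \<mu> - 1)"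
    proof -
      have "q * (exp \<mu> - 1) \<ge> q * (0 - 1)" using q0 by (intro mult_left_mono) auto
      hence "- q \<le> q * (exp \<mu> - 1)" by simp
      then show ?thesis using q1 by linarith
    qed
    moreover have "1 + q * (exp \<mu> - 1) \<le> exp (q * (exp \<mu> - 1))" using exp_ge_add_one_self[of "q * (exp \<mu> - 1)"] by simp
    ultimately show ?thesis by (intro mult_left_mono power_mono) auto
  qed
  also have "\<dots> = exp (- \<mu> * a + real R * q * (exp \<mu> - 1))"
  proof -
    have "exp (q * (exp \<mu> - 1)) ^ R = exp (real R * q * (exp \<mu> - 1))"
      by (simp add: exp_of_nat_mult[symmetric] mult.assoc)
    then show ?thesis by (simp add: exp_add[symmetric])
  qed
  finally show ?thesis .
qed


context grovE
begin

definition wt :: "nat \<Rightarrow> nat set \<Rightarrow> real" where "wt t e = (cmod (fT t e))\<^sup>2"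

lemma wt_val: "e \<in> vpairs n \<Longrightarrow> wt t e = (if e \<in> E then (fst (ac t))\<^sup>2 else (snd (ac t))\<^sup>2)"
  unfolding wt_def fT_def using Gf_iter[of t]
  by (auto simp: sg_def norm_mult)

lemma Amp_sq: "(cmod (Amp t h))\<^sup>2 = prod_list (map (wt t) h)"
  unfolding Amp_def wt_def by (induction h) (auto simp: norm_mult power_mult_distrib)

lemma wt_sum: "(\<Sum>e\<in>vpairs n. wt t e) = 1"
proof -
  have split: "vpairs n = E \<union> (vpairs n - E)" using Evp by auto
  have "(\<Sum>e\<in>vpairs n. wt t e) = (\<Sum>e\<in>E. wt t e) + (\<Sum>e\<in>vpairs n - E. wt t e)"
    by (subst split, rule sum.union_disjoint) (use finite_vpairs finE in auto)
  also have "\<dots> = real m * (fst (ac t))\<^sup>2 + (real N - real m) * (snd (ac t))\<^sup>2"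
  proof -
    have "(\<Sum>e\<in>E. wt t e) = (\<Sum>e\<in>E. (fst (ac t))\<^sup>2)" using Evp by (intro sum.cong) (auto simp: wt_val)
    moreover have "(\<Sum>e\<in>vpairs n - E. wt t e) = (\<Sum>e\<in>vpairs n - E. (snd (ac t))\<^sup>2)"
      by (intro sum.cong) (auto simp: wt_val)
    moreover have "card (vpairs n - E) = N - m" using Evp finE by (simp add: card_Diff_subset cardE Ndef)
    ultimately show ?thesis using mN by (simp add: cardE of_nat_diff)
  qed
  also have "\<dots> = (sin ((2 * real t + 1) * th))\<^sup>2 + (cos ((2 * real t + 1) * th))\<^sup>2"
  proof -
    have "(sqrt m * fst (ac t))\<^sup>2 = real m * (fst (ac t))\<^sup>2" by (simp add: power_mult_distrib)
    moreover have "(sqrt (real N - real m) * snd (ac t))\<^sup>2 = (real N - real m) * (snd (ac t))\<^sup>2"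
      using mN by (simp add: power_mult_distrib)
    ultimately show ?thesis using ac_closed[of t] by simp
  qed
  also have "\<dots> = 1" by simp
  finally show ?thesis .
qed

lemma cnt_lab: "real (cnt v (lab h)) = sum_list (map (\<lambda>e. if e \<in> E \<and> v \<in> e then 1 else 0) h)"
  unfolding cnt_def lab_def by (induction h) auto

lemma q_val: "(\<Sum>e\<in>vpairs n. if e \<in> E \<and> v \<in> e then wt t e else 0) = (fst (ac t))\<^sup>2 * real (deg E v)"
proof -
  have "(\<Sum>e\<in>vpairs n. if e \<in> E \<and> v \<in> e then wt t e else 0) = (\<Sum>e\<in>{e \<in> vpairs n. e \<in> E \<and> v \<in> e}. (fst (ac t))\<^sup>2)"
  proof -
    have "(\<Sum>e\<in>vpairs n. if e \<in> E \<and> v \<in> e then wt t e else 0) = (\<Sum>e\<in>{e \<in> vpairs n. e \<in> E \<and> v \<in> e}. wt t e)"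
      by (simp add: sum.inter_filter finite_vpairs)
    also have "\<dots> = (\<Sum>e\<in>{e \<in> vpairs n. e \<in> E \<and> v \<in> e}. (fst (ac t))\<^sup>2)"
      by (intro sum.cong) (auto simp: wt_val)
    finally show ?thesis .
  qed
  also have "{e \<in> vpairs n. e \<in> E \<and> v \<in> e} = {e \<in> E. v \<in> e}" using Evp by auto
  finally show ?thesis by (simp add: deg_def)
qed


lemma exp20a: "exp (1/20::real) \<le> 20/19"
proof -
  have "1 + (-1/20) \<le> exp (-1/20::real)" by (rule exp_ge_add_one_self)
  hence "19/20 \<le> exp (-1/20::real)" by simp
  hence "inverse (exp (-1/20::real)) \<le> inverse (19/20)" by (intro le_imp_inverse_le) auto
  thus ?thesis by (simp add: exp_minus[symmetric])
qed

lemma exp20b: "exp (-1/20::real) \<le> 20/21"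
proof -
  have "1 + 1/20 \<le> exp (1/20::real)" by (rule exp_ge_add_one_self)
  hence "21/20 \<le> exp (1/20::real)" by simp
  hence "inverse (exp (1/20::real)) \<le> inverse (21/20)" by (intro le_imp_inverse_le) auto
  thus ?thesis by (simp add: exp_minus)
qed


lemma wt_nonneg: "0 \<le> wt t e" unfolding wt_def by simp

lemma upper_tail:
  fixes R t :: nat and D :: real
  assumes D: "0 \<le> D" and dv: "real (deg E v) \<le> 9/10 * D"
  defines "\<tau> \<equiv> real R * (fst (ac t))\<^sup>2 * D"
  shows "(\<Sum>h\<in>Lt n R. if \<tau> \<le> real (cnt v (lab h)) then prod_list (map (wt t) h) else 0) \<le> exp (- \<tau> / 380)"
proof -
  let ?Q = "\<lambda>e. e \<in> E \<and> v \<in> e"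
  let ?\<alpha> = "(fst (ac t))\<^sup>2"
  have "(\<Sum>h\<in>Lt n R. if \<tau> \<le> real (cnt v (lab h)) then prod_list (map (wt t) h) else 0) \<le>
    exp (- (1/20) * \<tau> + real R * (\<Sum>e\<in>vpairs n. if ?Q e then wt t e else 0) * (exp (1/20) - 1))"
    by (rule chernoff) (auto simp: wt_nonneg wt_sum cnt_lab)
  also have "\<dots> \<le> exp (- \<tau> / 380)"
  proof -
    have q: "(\<Sum>e\<in>vpairs n. if ?Q e then wt t e else 0) = ?\<alpha> * real (deg E v)" by (rule q_val)
    have "real R * (?\<alpha> * real (deg E v)) * (exp (1/20) - 1) \<le> real R * (?\<alpha> * (9/10 * D)) * (1/19)"
    proof (rule mult_mono)
      show "real R * (?\<alpha> * real (deg E v)) \<le> real R * (?\<alpha> * (9/10 * D))"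
        using dv by (intro mult_left_mono) auto
      show "exp (1/20) - 1 \<le> (1/19::real)" using exp20a by simp
      show "0 \<le> real R * (?\<alpha> * (9 / 10 * D))" using D by simp
      show "0 \<le> exp (1/20) - (1::real)" by simp
    qed
    hence "- (1/20) * \<tau> + real R * (?\<alpha> * real (deg E v)) * (exp (1/20) - 1) \<le> - \<tau> / 380"
      unfolding \<tau>_def by (simp add: algebra_simps)
    thus ?thesis unfolding q by simp
  qed
  finally show ?thesis .
qed

lemma lower_tail:
  fixes R t :: nat and D :: real
  assumes D: "0 \<le> D" and dv: "11/10 * D \<le> real (deg E v)"
  defines "\<tau> \<equiv> real R * (fst (ac t))\<^sup>2 * D"
  shows "(\<Sum>h\<in>Lt n R. if real (cnt v (lab h)) < \<tau> then prod_list (map (wt t) h) else 0) \<le> exp (- \<tau> / 420)"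
proof -
  let ?Q = "\<lambda>e. e \<in> E \<and> v \<in> e"
  let ?\<alpha> = "(fst (ac t))\<^sup>2"
  have "(\<Sum>h\<in>Lt n R. if real (cnt v (lab h)) < \<tau> then prod_list (map (wt t) h) else 0) \<le>
    exp (- (-1/20) * \<tau> + real R * (\<Sum>e\<in>vpairs n. if ?Q e then wt t e else 0) * (exp (-1/20) - 1))"
    by (rule chernoff) (auto simp: wt_nonneg wt_sum cnt_lab)
  also have "\<dots> \<le> exp (- \<tau> / 420)"
  proof -
    have q: "(\<Sum>e\<in>vpairs n. if ?Q e then wt t e else 0) = ?\<alpha> * real (deg E v)" by (rule q_val)
    have "real R * (?\<alpha> * (11/10 * D)) * (1/21) \<le> real R * (?\<alpha> * real (deg E v)) * (1 - exp (-1/20))"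
    proof (rule mult_mono)
      show "real R * (?\<alpha> * (11/10 * D)) \<le> real R * (?\<alpha> * real (deg E v))"
        using dv by (intro mult_left_mono) auto
      show "(1/21::real) \<le> 1 - exp (-1/20)" using exp20b by simp
      show "0 \<le> real R * (?\<alpha> * real (deg E v))" by simp
      show "0 \<le> (1/21::real)" by simp
    qed
    hence "- (-1/20) * \<tau> + real R * (?\<alpha> * real (deg E v)) * (exp (-1/20) - 1) \<le> - \<tau> / 420"
      unfolding \<tau>_def by (simp add: algebra_simps)
    thus ?thesis unfolding q by simp
  qed
  finally show ?thesis .
qed


lemma prob_good:
  fixes R t :: nat and d :: real
  assumes n2: "2 \<le> n" and RA: "840 * ln (real n) \<le> real R * (fst (ac t))\<^sup>2 * real n powr d"
  shows "1 - 1 / real n \<le> (\<Sum>h\<in>Lt n R. if good_partition n d E (vhat n (real R * (fst (ac t))\<^sup>2 * real n powr d) (lab h))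
            then prod_list (map (wt t) h) else 0)"
proof -
  define D where "D = real n powr d"
  define \<tau> where "\<tau> = real R * (fst (ac t))\<^sup>2 * D"
  define Wh where "Wh h = prod_list (map (wt t) h)" for h
  define Bad where "Bad v h \<longleftrightarrow> (real (deg E v) < 9/10 * D \<and> \<tau> \<le> real (cnt v (lab h))) \<or>
      (11/10 * D < real (deg E v) \<and> real (cnt v (lab h)) < \<tau>)" for v h
  define G where "G h \<longleftrightarrow> good_partition n d E (vhat n \<tau> (lab h))" for h
  have D0: "0 \<le> D" unfolding D_def by simp
  have Wh0: "0 \<le> Wh h" for h unfolding Wh_def by (auto intro!: prod_list_nonneg simp: wt_nonneg)
  have lnpos: "0 < ln (real n)" using n2 by simp
  have tau0: "0 \<le> \<tau>" unfolding \<tau>_def using D0 by simp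
  have badex: "\<exists>v<n. Bad v h" if "\<not> G h" for h
  proof (rule ccontr)
    assume nb: "\<not> (\<exists>v<n. Bad v h)"
    have "good_partition n d E (vhat n \<tau> (lab h))"
      unfolding good_partition_def
    proof (intro conjI subsetI)
      fix v assume "v \<in> vhat n \<tau> (lab h)"
      then have v: "v < n" "\<tau> \<le> real (cnt v (lab h))" unfolding vhat_def by auto
      then show "v \<in> {..<n}" by simp
      from v nb have "\<not> real (deg E v) < 9/10 * D" unfolding Bad_def by auto
      then show "v \<in> high_set n d E" using v unfolding high_set_def D_def by simp
    next
      fix v assume "v \<in> {..<n} - vhat n \<tau> (lab h)"
      then have v: "v < n" "real (cnt v (lab h)) < \<tau>" unfolding vhat_def by auto
      from v nb have "\<not> 11/10 * D < real (deg E v)" unfolding Bad_def by auto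
      then show "v \<in> low_set n d E" using v unfolding low_set_def D_def by simp
    qed
    then show False using that unfolding G_def by simp
  qed
  have pt: "(if \<not> G h then Wh h else 0) \<le> (\<Sum>v<n. if Bad v h then Wh h else 0)" for h
  proof (cases "G h")
    case False
    then obtain v where v: "v < n" "Bad v h" using badex by blast
    have "(if Bad v h then Wh h else 0) \<le> (\<Sum>v<n. if Bad v h then Wh h else 0)"
      by (rule member_le_sum) (use v Wh0 in auto)
    then show ?thesis using v False by simp
  next
    case True then show ?thesis using Wh0 by (simp add: sum_nonneg)
  qed
  have each: "(\<Sum>h\<in>Lt n R. if Bad v h then Wh h else 0) \<le> exp (- \<tau> / 420)" for v
  proof -
    consider "real (deg E v) < 9/10 * D" | "11/10 * D < real (deg E v)" |
      "9/10 * D \<le> real (deg E v) \<and> real (deg E v) \<le> 11/10 * D" by linarith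
    then show ?thesis
    proof cases
      case 1
      then have "\<And>h. Bad v h = (\<tau> \<le> real (cnt v (lab h)))" unfolding Bad_def using D0 by auto
      then have "(\<Sum>h\<in>Lt n R. if Bad v h then Wh h else 0) \<le> exp (- \<tau> / 380)"
        unfolding Wh_def \<tau>_def using upper_tail[OF D0, of v R t] 1 by simp
      also have "\<dots> \<le> exp (- \<tau> / 420)" using tau0 by simp
      finally show ?thesis .
    next
      case 2
      then have "\<And>h. Bad v h = (real (cnt v (lab h)) < \<tau>)" unfolding Bad_def using D0 by auto
      then show ?thesis
        unfolding Wh_def \<tau>_def using lower_tail[OF D0, of v R t] 2 by simp
    next
      case 3
      then have "\<And>h. \<not> Bad v h" unfolding Bad_def by auto
      then show ?thesis by simp
    qed
  qed
  have small: "exp (- \<tau> / 420) \<le> 1 / (real n)\<^sup>2"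
  proof -
    have "- \<tau> / 420 \<le> - 2 * ln (real n)" using RA unfolding \<tau>_def D_def by simp
    hence "exp (- \<tau> / 420) \<le> exp (- 2 * ln (real n))" by simp
    also have "exp (- 2 * ln (real n)) = 1 / (real n)\<^sup>2"
      using n2 by (simp add: exp_minus exp_of_nat_mult[of 2, simplified] power2_eq_square divide_inverse)
    finally show ?thesis .
  qed
  have "(\<Sum>h\<in>Lt n R. if \<not> G h then Wh h else 0) \<le> (\<Sum>h\<in>Lt n R. \<Sum>v<n. if Bad v h then Wh h else 0)"
    by (rule sum_mono) (rule pt)
  also have "\<dots> = (\<Sum>v<n. \<Sum>h\<in>Lt n R. if Bad v h then Wh h else 0)" by (rule sum.swap)
  also have "\<dots> \<le> (\<Sum>v<n. 1 / (real n)\<^sup>2)" by (rule sum_mono) (use each small in \<open>meson order_trans\<close>)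
  also have "\<dots> = 1 / real n" using n2 by (simp add: power2_eq_square)
  finally have bad: "(\<Sum>h\<in>Lt n R. if \<not> G h then Wh h else 0) \<le> 1 / real n" .
  have tot: "(\<Sum>h\<in>Lt n R. Wh h) = 1" unfolding Wh_def sum_prod_Lt wt_sum by simp
  have "(\<Sum>h\<in>Lt n R. Wh h) = (\<Sum>h\<in>Lt n R. if G h then Wh h else 0) + (\<Sum>h\<in>Lt n R. if \<not> G h then Wh h else 0)"
    by (simp add: sum.distrib[symmetric] if_distrib cong: sum.cong) (intro sum.cong; simp)
  then show ?thesis using bad tot unfolding G_def Wh_def \<tau>_def D_def by linarith
qed

end


context grov
begin

lemma th_bounds: "0 < th" "th \<le> pi / 2" "sqrt (real m / real N) \<le> th"
proof -
  have s0: "0 < sqrt (real m / real N)" using mpos Npos by simp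
  have s1: "sqrt (real m / real N) \<le> 1" using mN Npos by simp
  have b: "- (pi/2) \<le> th \<and> th \<le> pi/2" unfolding th_def
    by (rule arcsin_bounded) (use s0 s1 in linarith)+
  then show "th \<le> pi / 2" by simp
  show "0 < th"
  proof (rule ccontr)
    assume "\<not> 0 < th"
    hence "sin th \<le> sin 0" using b by (intro sin_monotone_2pi_le) auto
    thus False using sin_th s0 by simp
  qed
  then show "sqrt (real m / real N) \<le> th" using sin_x_le_x[of th] sin_th by simp
qed

definition tt :: nat where "tt = nat \<lfloor>pi / (4 * th) - 1/2\<rfloor>"

lemma tt_props: "1/4 \<le> (sin ((2 * real tt + 1) * th))\<^sup>2" "real tt \<le> pi / (4 * th)"
proof -
  define x where "x = pi / (4 * th) - 1/2"
  have th0: "0 < th" and th1: "th \<le> pi/2" using th_bounds by auto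
  have x0: "0 \<le> x"
  proof -
    have "pi / (4 * (pi/2)) \<le> pi / (4 * th)" using th0 th1 by (intro divide_left_mono) auto
    then show ?thesis unfolding x_def by simp
  qed
  have t1: "real tt \<le> x" unfolding tt_def x_def[symmetric] using x0 by linarith
  have t2: "x < real tt + 1" unfolding tt_def x_def[symmetric] using x0 by linarith
  show "real tt \<le> pi / (4 * th)" using t1 unfolding x_def by simp
  define \<phi> where "\<phi> = (2 * real tt + 1) * th"
  have xth: "(2 * x + 1) * th = pi / 2" unfolding x_def using th0 by (simp add: field_simps)
  have p1: "\<phi> \<le> pi / 2" unfolding \<phi>_def using t1 th0 xth
    by (metis add_le_cancel_right mult_le_cancel_right_pos mult_left_mono zero_le_numeral)
  have p2: "pi / 2 - 2 * th < \<phi>"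
  proof -
    have "(2 * x + 1) * th < (2 * real tt + 3) * th" using t2 th0 by (intro mult_strict_right_mono) auto
    then show ?thesis unfolding \<phi>_def using xth by (simp add: algebra_simps)
  qed
  have p3: "th \<le> \<phi>" unfolding \<phi>_def using th0 by simp
  have "pi / 6 \<le> \<phi>"
  proof (cases "th \<le> pi / 6")
    case True then show ?thesis using p2 by simp
  next
    case False then show ?thesis using p3 by simp
  qed
  hence "sin (pi / 6) \<le> sin \<phi>" using p1 by (intro sin_monotone_2pi_le) auto
  hence "1/2 \<le> sin \<phi>" by (simp add: sin_30)
  hence "(1/2)\<^sup>2 \<le> (sin \<phi>)\<^sup>2" by (intro power_mono) auto
  then show "1/4 \<le> (sin ((2 * real tt + 1) * th))\<^sup>2" unfolding \<phi>_def by (simp add: power2_eq_square)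
qed

lemma alpha_lb: "1 / (4 * real m) \<le> (fst (ac tt))\<^sup>2"
proof -
  have "(sqrt m * fst (ac tt))\<^sup>2 = real m * (fst (ac tt))\<^sup>2" by (simp add: power_mult_distrib)
  hence "real m * (fst (ac tt))\<^sup>2 \<ge> 1/4" using ac_closed[of tt] tt_props(1) by simp
  thus ?thesis using mpos by (simp add: field_simps)
qed

lemma tt_le: "real tt \<le> pi / 4 * sqrt (real N / real m)"
proof -
  have th0: "0 < th" using th_bounds by auto
  have s0: "0 < sqrt (real m / real N)" using mpos Npos by simp
  have "pi / (4 * th) \<le> pi / (4 * sqrt (real m / real N))"
    using th_bounds(3) s0 th0 by (intro divide_left_mono) (auto intro: mult_pos_pos)
  also have "\<dots> = pi / 4 * sqrt (real N / real m)"
    using mpos Npos by (simp add: real_sqrt_divide field_simps)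
  finally show ?thesis using tt_props(2) by linarith
qed

end


lemma card_vpairs_le: "card (vpairs n) \<le> n * n"
proof -
  have "vpairs n \<subseteq> (\<lambda>(u,v). {u,v}) ` ({..<n} \<times> {..<n})"
    unfolding vpairs_def by auto
  hence "card (vpairs n) \<le> card ((\<lambda>(u,v). {u,v}) ` ({..<n} \<times> {..<n}))"
    by (intro card_mono) auto
  also have "\<dots> \<le> card ({..<n} \<times> {..<n})" by (rule card_image_le) simp
  finally show ?thesis by simp
qed

lemma deg_le: "E \<subseteq> vpairs n \<Longrightarrow> deg E v \<le> card E"
  unfolding deg_def by (intro card_mono) (auto intro: finite_subset finite_vpairs)

lemma ln_half: "2 \<le> n \<Longrightarrow> 1/2 \<le> ln (real n)"
proof -
  assume n: "2 \<le> n"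
  have "1 + (-1/2) \<le> exp (-1/2::real)" by (rule exp_ge_add_one_self)
  hence "inverse (exp (-1/2::real)) \<le> inverse (1/2)" by (intro le_imp_inverse_le) auto
  hence "exp (1/2::real) \<le> 2" by (simp add: exp_minus[symmetric])
  also have "\<dots> \<le> real n" using n by simp
  finally show ?thesis using n by (subst ln_ge_iff) auto
qed

definition Id1 :: qmat where "Id1 = (\<lambda>i j. if i = j then 1 else 0)"

lemma trivial_case:
  assumes n2: "2 \<le> n" and G: "\<forall>E. is_graph n E \<and> card E = m \<longrightarrow> good_partition n d E {}"
  shows "\<exists>(W::nat) (Us::qmat list) (s0::idx) (out::idx \<Rightarrow> nat set).
        W > 0 \<and> Us \<noteq> [] \<and> s0 \<in> qbasis n W \<and>
        (\<forall>U\<in>set Us. unitary_on (qbasis n W) U) \<and>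
        real (length Us - 1) \<le> 0 \<and>
        (\<forall>E. is_graph n E \<and> card E = m \<longrightarrow>
           out_prob (qbasis n W) E Us s0 out (good_partition n d E) \<ge> 1 - 1 / real n)"
proof (intro exI conjI)
  let ?s = "(e0, False, 0::nat)"
  show "(1::nat) > 0" by simp
  show "[Id1] \<noteq> []" by simp
  show s: "?s \<in> qbasis n 1" unfolding qbasis_def using e0_vp[OF n2] by simp
  show "\<forall>U\<in>set [Id1]. unitary_on (qbasis n 1) U"
  proof -
    have "\<And>i j. (\<Sum>k\<in>qbasis n 1. cnj (Id1 k i) * Id1 k j) = (\<Sum>k\<in>qbasis n 1. if k = i then (if i = j then 1 else 0) else 0)"
      by (intro sum.cong) (auto simp: Id1_def)
    then show ?thesis unfolding unitary_on_def by (simp add: finite_qbasis)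
  qed
  show "real (length [Id1] - 1) \<le> 0" by simp
  show "\<forall>E. is_graph n E \<and> card E = m \<longrightarrow>
     out_prob (qbasis n 1) E [Id1] ?s (\<lambda>_. {}) (good_partition n d E) \<ge> 1 - 1 / real n"
  proof (intro allI impI)
    fix E assume E: "is_graph n E \<and> card E = m"
    have "out_prob (qbasis n 1) E [Id1] ?s (\<lambda>_. {}) (good_partition n d E) =
      (\<Sum>j\<in>qbasis n 1. (cmod (Id1 j ?s))\<^sup>2)"
      unfolding out_prob_def run.simps app_ket[OF s finite_qbasis] using G E by simp
    also have "\<dots> = (\<Sum>j\<in>qbasis n 1. if j = ?s then 1 else 0)"
      by (intro sum.cong) (auto simp: Id1_def)
    also have "\<dots> = 1" using s finite_qbasis by simp
    finally show "out_prob (qbasis n 1) E [Id1] ?s (\<lambda>_. {}) (good_partition n d E) \<ge> 1 - 1 / real n"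
      by simp
  qed
qed


lemma main_case:
  assumes n2: "2 \<le> n" and mD: "11/10 * real n powr d < real m" and mN: "m \<le> card (vpairs n)"
  shows "\<exists>(W::nat) (Us::qmat list) (s0::idx) (out::idx \<Rightarrow> nat set).
        W > 0 \<and> Us \<noteq> [] \<and> s0 \<in> qbasis n W \<and>
        (\<forall>U\<in>set Us. unitary_on (qbasis n W) U) \<and>
        real (length Us - 1) \<le> 10086 * (ln (real n)) ^ 1 * real n powr (1 - d) * sqrt (real m) \<and>
        (\<forall>E. is_graph n E \<and> card E = m \<longrightarrow>
           out_prob (qbasis n W) E Us s0 out (good_partition n d E) \<ge> 1 - 1 / real n)"
proof -
  define N where "N = card (vpairs n)"
  define D where "D = real n powr d"
  define L where "L = ln (real n)"
  have Dpos: "0 < D" unfolding D_def using n2 by simp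
  have mpos: "0 < m" using mD Dpos unfolding D_def by (cases m) auto
  have mN': "m \<le> N" using mN unfolding N_def .
  interpret g: grov N m by unfold_locales (use mpos mN' in auto)
  define t where "t = g.tt"
  define \<alpha> where "\<alpha> = (fst (g.ac t))\<^sup>2"
  define R where "R = nat \<lceil>3360 * L * real m / D\<rceil>"
  define \<tau> where "\<tau> = real R * \<alpha> * D"
  have L2: "1/2 \<le> L" unfolding L_def using ln_half[OF n2] .
  have Rlo: "3360 * L * real m / D \<le> real R" unfolding R_def by linarith
  have Rhi: "real R \<le> 3360 * L * real m / D + 1"
  proof -
    have "0 \<le> 3360 * L * real m / D" using L2 Dpos by simp
    then show ?thesis unfolding R_def by linarith
  qed
  have alb: "1 / (4 * real m) \<le> \<alpha>" unfolding \<alpha>_def t_def by (rule g.alpha_lb)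
  have RA: "840 * ln (real n) \<le> real R * (fst (g.ac t))\<^sup>2 * real n powr d"
  proof -
    have "(3360 * L * real m / D) * (1 / (4 * real m)) \<le> real R * \<alpha>"
      using Rlo alb L2 Dpos mpos by (intro mult_mono) auto
    hence "(3360 * L * real m / D) * (1 / (4 * real m)) * D \<le> real R * \<alpha> * D"
      using Dpos by (intro mult_right_mono) auto
    moreover have "(3360 * L * real m / D) * (1 / (4 * real m)) * D = 840 * L"
      using Dpos mpos by (simp add: field_simps)
    ultimately show ?thesis unfolding L_def \<alpha>_def D_def by simp
  qed
  have len: "real (length (algo n R t) - 1) \<le> 10086 * (ln (real n)) ^ 1 * real n powr (1 - d) * sqrt (real m)"
  proof -
    define z where "z = sqrt (real m)"
    define y where "y = real n / z"
    have z0: "0 < z" unfolding z_def using mpos by simp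
    have zz: "z * z = real m" unfolding z_def by simp
    have nyz: "real n = y * z" unfolding y_def using z0 by simp
    have Nn: "real N \<le> real n * real n"
    proof -
      have "N \<le> n * n" unfolding N_def by (rule card_vpairs_le)
      then show ?thesis by (simp only: of_nat_mult[symmetric] of_nat_le_iff)
    qed
    have mn: "real m \<le> real n * real n" using mN' Nn by linarith
    have y1: "1 \<le> y"
    proof -
      have "sqrt (real m) \<le> sqrt (real n * real n)" using mn by (rule real_sqrt_le_mono)
      hence "z \<le> real n" unfolding z_def by simp
      then show ?thesis unfolding y_def using z0 by simp
    qed
    have tb: "real t + 2 \<le> 3 * y"
    proof -
      have "sqrt (real N / real m) \<le> y"
      proof -
        from Nn have "sqrt (real N / real m) \<le> sqrt (real n * real n / real m)"
          using mpos by (intro real_sqrt_le_mono divide_right_mono) auto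
        also have "\<dots> = y" unfolding y_def z_def by (simp add: real_sqrt_divide)
        finally show ?thesis .
      qed
      moreover have "real t \<le> pi / 4 * sqrt (real N / real m)" unfolding t_def by (rule g.tt_le)
      moreover have "pi / 4 * sqrt (real N / real m) \<le> 1 * sqrt (real N / real m)"
        using pi_less_4 by (intro mult_right_mono) auto
      ultimately show ?thesis using y1 by linarith
    qed
    have "real (length (algo n R t) - 1) = real R * (real t + 2)" unfolding length_algo by (simp add: algebra_simps)
    also have "\<dots> \<le> (3360 * L * (z * z) / D + 1) * (3 * y)"
      using Rhi tb zz by (intro mult_mono) auto
    also have "\<dots> = 10080 * L * y * (z * z) / D + 3 * y" by (simp add: field_simps)
    also have "\<dots> \<le> 10080 * L * y * (z * z) / D + 6 * L * y * (z * z) / D"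
    proof -
      have "D \<le> z * z" using mD zz unfolding D_def by simp
      hence "1 \<le> (z * z) / D" using Dpos by simp
      moreover have "1 \<le> 2 * L" using L2 by simp
      ultimately have "1 * 1 \<le> (2 * L) * ((z * z) / D)" by (intro mult_mono) auto
      hence "3 * y * 1 \<le> 3 * y * ((2 * L) * ((z * z) / D))" using y1 by (intro mult_left_mono) auto
      moreover have "3 * y * ((2 * L) * ((z * z) / D)) = 6 * L * y * (z * z) / D" by simp
      ultimately have "3 * y \<le> 6 * L * y * (z * z) / D" by (simp add: mult_ac)
      then show ?thesis by (rule add_left_mono)
    qed
    also have "\<dots> = 10086 * L * (y * z / D) * z" by (simp add: field_simps)
    also have "y * z / D = real n powr (1 - d)"
      unfolding nyz[symmetric] D_def using n2 by (simp add: powr_diff)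
    finally show ?thesis unfolding L_def z_def by simp
  qed
  show ?thesis
  proof (intro exI conjI)
    show "Wf n R > 0" by (rule W_pos)
    show "algo n R t \<noteq> []" by (simp add: algo_def)
    show "s0 \<in> qbasis n (Wf n R)" by (rule s0_in[OF n2])
    show "\<forall>U\<in>set (algo n R t). unitary_on (qbasis n (Wf n R)) U" by (rule algo_unitary[OF n2])
    show "real (length (algo n R t) - 1) \<le> 10086 * (ln (real n)) ^ 1 * real n powr (1 - d) * sqrt (real m)"
      by (rule len)
    show "\<forall>E. is_graph n E \<and> card E = m \<longrightarrow>
      1 - 1 / real n \<le> out_prob (qbasis n (Wf n R)) E (algo n R t) s0 (outf n \<tau>) (good_partition n d E)"
    proof (intro allI impI)
      fix E assume E: "is_graph n E \<and> card E = m"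
      interpret ge: grovE N m n E
        by unfold_locales (use E in \<open>auto simp: is_graph_def N_def\<close>)
      have "out_prob (qbasis n (Wf n R)) E (algo n R t) s0 (outf n \<tau>) (good_partition n d E) =
        (\<Sum>h\<in>Lt n R. if good_partition n d E (vhat n \<tau> (ge.lab h)) then prod_list (map (ge.wt t) h) else 0)"
        unfolding ge.out_prob_eq[OF n2] ge.Amp_sq ..
      moreover have "1 - 1 / real n \<le> (\<Sum>h\<in>Lt n R. if good_partition n d E (vhat n \<tau> (ge.lab h)) then prod_list (map (ge.wt t) h) else 0)"
        using ge.prob_good[OF n2 RA] unfolding \<tau>_def \<alpha>_def D_def .
      ultimately show "1 - 1 / real n \<le> out_prob (qbasis n (Wf n R)) E (algo n R t) s0 (outf n \<tau>) (good_partition n d E)"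
        by simp
    qed
  qed
qed


lemma each_nm:
  fixes d :: real and n m :: nat
  assumes n2: "2 \<le> n"
  shows "\<exists>(W::nat) (Us::qmat list) (s0::idx) (out::idx \<Rightarrow> nat set).
        W > 0 \<and> Us \<noteq> [] \<and> s0 \<in> qbasis n W \<and>
        (\<forall>U\<in>set Us. unitary_on (qbasis n W) U) \<and>
        real (length Us - 1) \<le> 10086 * (ln (real n)) ^ 1 * real n powr (1 - d) * sqrt (real m) \<and>
        (\<forall>E. is_graph n E \<and> card E = m \<longrightarrow>
           out_prob (qbasis n W) E Us s0 out (good_partition n d E) \<ge> 1 - 1 / real n)"
  proof (cases "real m \<le> 11/10 * real n powr d \<or> card (vpairs n) < m")
    case True
    have G: "\<forall>E. is_graph n E \<and> card E = m \<longrightarrow> good_partition n d E {}"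
    proof (intro allI impI)
      fix E assume E: "is_graph n E \<and> card E = m"
      have Evp: "E \<subseteq> vpairs n" using E unfolding is_graph_def by simp
      have "card E \<le> card (vpairs n)" using Evp finite_vpairs by (rule card_mono[rotated])
      hence m1: "real m \<le> 11/10 * real n powr d" using True E by auto
      have "\<And>v. real (deg E v) \<le> 11/10 * real n powr d"
      proof -
        fix v
        have "real (deg E v) \<le> real m" using deg_le[OF Evp, of v] E by simp
        then show "real (deg E v) \<le> 11/10 * real n powr d" using m1 by linarith
      qed
      then show "good_partition n d E {}"
        unfolding good_partition_def low_set_def by auto
    qed
    obtain W Us s0 out where W: "W > 0 \<and> Us \<noteq> [] \<and> s0 \<in> qbasis n W \<and>
        (\<forall>U\<in>set Us. unitary_on (qbasis n W) U) \<and>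
        real (length Us - 1) \<le> 0 \<and>
        (\<forall>E. is_graph n E \<and> card E = m \<longrightarrow>
           out_prob (qbasis n W) E Us s0 out (good_partition n d E) \<ge> 1 - 1 / real n)"
      using trivial_case[OF n2 G] by blast
    have "0 \<le> 10086 * (ln (real n)) ^ 1 * real n powr (1 - d) * sqrt (real m)"
      using n2 by simp
    then show ?thesis using W by (intro exI[of _ W] exI[of _ Us] exI[of _ s0] exI[of _ out]) auto
  next
    case False
    then show ?thesis by (intro main_case n2) auto
  qed
theorem proposition1:
  fixes d :: real
  assumes "0 \<le> d" and "d \<le> 1"
  shows "\<exists>(C::real) (k::nat). C > 0 \<and>
    (\<forall>n::nat. n \<ge> 2 \<longrightarrow> (\<forall>m::nat.
      \<exists>(W::nat) (Us::qmat list) (s0::idx) (out::idx \<Rightarrow> nat set).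
        W > 0 \<and> Us \<noteq> [] \<and> s0 \<in> qbasis n W \<and>
        (\<forall>U\<in>set Us. unitary_on (qbasis n W) U) \<and>
        real (length Us - 1) \<le> C * (ln (real n)) ^ k * real n powr (1 - d) * sqrt (real m) \<and>
        (\<forall>E. is_graph n E \<and> card E = m \<longrightarrow>
           out_prob (qbasis n W) E Us s0 out (good_partition n d E) \<ge> 1 - 1 / real n)))"
  apply (rule exI[of _ "10086::real"], rule exI[of _ "1::nat"], rule conjI)
  apply simp
  apply (intro allI impI)
  by (rule each_nm)


end
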